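(* Let $K$ be a compact hypergroup and let $\sigma$ be an adapted probability measure on $K$. Then $H_\sigma(K)=\mathbb{C}\omega$, where $\omega$ is the normalized Haar measure on $K$.
   Context: $K$ is a compact hypergroup (Jewett/Bloom–Heyer sense) with involution $x\mapsto\check x$, assumed to have a left Haar measure; the normalized Haar measure $\omega$ is the Haar measure of total mass one. For $\sigma\in M(K)$, $H_\sigma(K)=\{\mu\in M(K):\sigma*\mu=\mu\}$. For subsets $A,B\subseteq K$, $A*B=\bigcup_{a\in A,b\in B}\operatorname{supp}(\delta_a*\delta_b)$, $A^n$ is the $n$-fold product and $\check A=\{\check a:a\in A\}$. A measure $\mu\in M(K)$ is adapted if $K=\overline{\bigcup_{n\geq1}\left(\operatorname{supp}|\mu|\cup(\operatorname{supp}|\mu|)\check{}\right)^n}$. *)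

theory Defs
  imports "HOL-Analysis.Analysis"
begin

text \<open>
The hypergroup K is the whole (compact Hausdorff) type 'a.
Since K is compact, the space M(K) of complex Radon measures is identified
(Riesz representation) with the bounded linear functionals on C(K)
(continuous complex-valued functions on K).  A functional is represented by a
map of type ('a => complex) => complex; only its values on C(K) matter.
The convolution of point measures delta_x * delta_y is given by the
parameter conv: conv x y is the functional f |-> (delta_x * delta_y)(f),
i.e. "f(x*y)".
\<close>

definition CK :: "('a::topological_space \<Rightarrow> complex) set" where
  "CK = {f. continuous_on UNIV f}"

definition supnorm :: "('a \<Rightarrow> complex) \<Rightarrow> real" where
  "supnorm f = (SUP x. norm (f x))"

definition lin_on_CK :: "(('a::topological_space \<Rightarrow> complex) \<Rightarrow> complex) \<Rightarrow> bool" where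
  "lin_on_CK \<phi> \<longleftrightarrow>
     (\<forall>f\<in>CK. \<forall>g\<in>CK. \<phi> (\<lambda>x. f x + g x) = \<phi> f + \<phi> g) \<and>
     (\<forall>f\<in>CK. \<forall>c. \<phi> (\<lambda>x. c * f x) = c * \<phi> f)"

definition cmeasure :: "(('a::topological_space \<Rightarrow> complex) \<Rightarrow> complex) \<Rightarrow> bool" where
  "cmeasure \<mu> \<longleftrightarrow> lin_on_CK \<mu> \<and> (\<exists>B. \<forall>f\<in>CK. norm (\<mu> f) \<le> B * supnorm f)"

definition positive_fun :: "(('a::topological_space \<Rightarrow> complex) \<Rightarrow> complex) \<Rightarrow> bool" where
  "positive_fun \<mu> \<longleftrightarrow>
     (\<forall>f\<in>CK. (\<forall>x. f x = complex_of_real (Re (f x)) \<and> Re (f x) \<ge> 0) \<longrightarrow>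
        \<mu> f = complex_of_real (Re (\<mu> f)) \<and> Re (\<mu> f) \<ge> 0)"

definition prob_fun :: "(('a::topological_space \<Rightarrow> complex) \<Rightarrow> complex) \<Rightarrow> bool" where
  "prob_fun \<mu> \<longleftrightarrow> lin_on_CK \<mu> \<and> positive_fun \<mu> \<and> \<mu> (\<lambda>_. 1) = 1"

text \<open>Support of a measure: complement of the largest open set on which it vanishes.
 (For a complex measure mu this coincides with supp |mu|.)\<close>
definition msupp :: "(('a::topological_space \<Rightarrow> complex) \<Rightarrow> complex) \<Rightarrow> 'a set" where
  "msupp \<mu> = - \<Union>{U. open U \<and>
       (\<forall>f\<in>CK. closure {y. f y \<noteq> 0} \<subseteq> U \<longrightarrow> \<mu> f = 0)}"

definition mconv ::
  "('a \<Rightarrow> 'a \<Rightarrow> ('a \<Rightarrow> complex) \<Rightarrow> complex) \<Rightarrow>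
   (('a \<Rightarrow> complex) \<Rightarrow> complex) \<Rightarrow> (('a \<Rightarrow> complex) \<Rightarrow> complex) \<Rightarrow>
   ('a \<Rightarrow> complex) \<Rightarrow> complex" where
  "mconv conv \<mu> \<nu> f = \<mu> (\<lambda>x. \<nu> (\<lambda>y. conv x y f))"

text \<open>Compact hypergroup (Jewett / Bloom--Heyer axioms, stated for point measures).\<close>
definition compact_hypergroup ::
  "('a::t2_space \<Rightarrow> 'a \<Rightarrow> ('a \<Rightarrow> complex) \<Rightarrow> complex) \<Rightarrow> 'a \<Rightarrow> ('a \<Rightarrow> 'a) \<Rightarrow> bool" where
  "compact_hypergroup conv e invo \<longleftrightarrow>
     compact (UNIV :: 'a set) \<and>
     \<comment> \<open>delta_x * delta_y is a probability measure (compact support automatic)\<close>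
     (\<forall>x y. prob_fun (conv x y)) \<and>
     \<comment> \<open>associativity: (delta_x*delta_y)*delta_z = delta_x*(delta_y*delta_z)\<close>
     (\<forall>x y z. \<forall>f\<in>CK. conv x y (\<lambda>u. conv u z f) = conv y z (\<lambda>v. conv x v f)) \<and>
     \<comment> \<open>(x,y) |-> delta_x*delta_y is continuous (weak topology = cone topology, K compact)\<close>
     (\<forall>f\<in>CK. continuous_on UNIV (\<lambda>p. conv (fst p) (snd p) f)) \<and>
     \<comment> \<open>(x,y) |-> supp(delta_x*delta_y) continuous for the Michael (Vietoris) topology\<close>
     (\<forall>U. open U \<longrightarrow>
        open {p. msupp (conv (fst p) (snd p)) \<subseteq> U} \<and>
        open {p. msupp (conv (fst p) (snd p)) \<inter> U \<noteq> {}}) \<and>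
     \<comment> \<open>identity: delta_e * delta_x = delta_x * delta_e = delta_x\<close>
     (\<forall>x. \<forall>f\<in>CK. conv e x f = f x \<and> conv x e f = f x) \<and>
     \<comment> \<open>involution: continuous, involutive, anti-homomorphic\<close>
     continuous_on UNIV invo \<and> (\<forall>x. invo (invo x) = x) \<and>
     (\<forall>x y. \<forall>f\<in>CK. conv x y (f \<circ> invo) = conv (invo y) (invo x) f) \<and>
     \<comment> \<open>e in supp(delta_x*delta_y) iff x = invo y\<close>
     (\<forall>x y. e \<in> msupp (conv x y) \<longleftrightarrow> x = invo y)"

definition normalized_haar ::
  "('a::topological_space \<Rightarrow> 'a \<Rightarrow> ('a \<Rightarrow> complex) \<Rightarrow> complex) \<Rightarrow>
   (('a \<Rightarrow> complex) \<Rightarrow> complex) \<Rightarrow> bool" where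
  "normalized_haar conv \<omega> \<longleftrightarrow> prob_fun \<omega> \<and>
     (\<forall>x. \<forall>f\<in>CK. \<omega> (\<lambda>y. conv x y f) = \<omega> f)"

definition set_conv ::
  "('a::topological_space \<Rightarrow> 'a \<Rightarrow> ('a \<Rightarrow> complex) \<Rightarrow> complex) \<Rightarrow> 'a set \<Rightarrow> 'a set \<Rightarrow> 'a set" where
  "set_conv conv A B = (\<Union>a\<in>A. \<Union>b\<in>B. msupp (conv a b))"

fun set_pow ::
  "('a::topological_space \<Rightarrow> 'a \<Rightarrow> ('a \<Rightarrow> complex) \<Rightarrow> complex) \<Rightarrow> 'a set \<Rightarrow> nat \<Rightarrow> 'a set" where
  "set_pow conv A 0 = A"   \<comment> \<open>unused index; A^n for n >= 1 is set_pow conv A n\<close>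
| "set_pow conv A (Suc 0) = A"
| "set_pow conv A (Suc (Suc n)) = set_conv conv (set_pow conv A (Suc n)) A"

definition adapted ::
  "('a::topological_space \<Rightarrow> 'a \<Rightarrow> ('a \<Rightarrow> complex) \<Rightarrow> complex) \<Rightarrow> ('a \<Rightarrow> 'a) \<Rightarrow>
   (('a \<Rightarrow> complex) \<Rightarrow> complex) \<Rightarrow> bool" where
  "adapted conv invo \<mu> \<longleftrightarrow>
     UNIV = closure (\<Union>n\<in>{1..}. set_pow conv (msupp \<mu> \<union> invo ` msupp \<mu>) n)"

definition H_sigma ::
  "('a::topological_space \<Rightarrow> 'a \<Rightarrow> ('a \<Rightarrow> complex) \<Rightarrow> complex) \<Rightarrow>
   (('a \<Rightarrow> complex) \<Rightarrow> complex) \<Rightarrow> (('a \<Rightarrow> complex) \<Rightarrow> complex) set" where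
  "H_sigma conv \<sigma> = {\<mu>. cmeasure \<mu> \<and> (\<forall>f\<in>CK. mconv conv \<sigma> \<mu> f = \<mu> f)}"

end

theory Submission
  imports Defs
begin

lemma CK_iff: "f \<in> CK \<longleftrightarrow> continuous_on UNIV f"
  by (simp add: CK_def)

lemma CK_const[simp]: "(\<lambda>_. c) \<in> CK"
  by (simp add: CK_def)

lemma CK_add: "f \<in> CK \<Longrightarrow> g \<in> CK \<Longrightarrow> (\<lambda>x. f x + g x) \<in> CK"
  by (simp add: CK_def continuous_on_add)

lemma CK_diff: "f \<in> CK \<Longrightarrow> g \<in> CK \<Longrightarrow> (\<lambda>x. f x - g x) \<in> CK"
  by (simp add: CK_def continuous_on_diff)

lemma CK_mult: "f \<in> CK \<Longrightarrow> g \<in> CK \<Longrightarrow> (\<lambda>x. f x * g x) \<in> CK"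
  by (simp add: CK_def continuous_on_mult)

lemma CK_cmult: "f \<in> CK \<Longrightarrow> (\<lambda>x. c * f x) \<in> CK"
  by (simp add: CK_def continuous_on_mult)

lemma CK_ofreal: "continuous_on UNIV r \<Longrightarrow> (\<lambda>x. complex_of_real (r x)) \<in> CK"
  unfolding CK_def mem_Collect_eq by (intro continuous_intros)

lemma CK_Re: "f \<in> CK \<Longrightarrow> continuous_on UNIV (\<lambda>x. Re (f x))"
  unfolding CK_def mem_Collect_eq by (intro continuous_intros)

lemma CK_Im: "f \<in> CK \<Longrightarrow> continuous_on UNIV (\<lambda>x. Im (f x))"
  unfolding CK_def mem_Collect_eq by (intro continuous_intros)

lemma CK_comp: "f \<in> CK \<Longrightarrow> continuous_on UNIV g \<Longrightarrow> (\<lambda>x. f (g x)) \<in> CK"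
  unfolding CK_def using continuous_on_compose2[of UNIV f UNIV g] by auto

lemma supnorm_ge:
  fixes f :: "'a::topological_space \<Rightarrow> complex"
  assumes "compact (UNIV::'a set)" "f \<in> CK"
  shows "norm (f x) \<le> supnorm f"
proof -
  have "compact (f ` UNIV)" using assms compact_continuous_image by (auto simp: CK_def)
  then have "bounded (f ` UNIV)" by (rule compact_imp_bounded)
  then obtain B where "\<forall>y. norm (f y) \<le> B" by (auto simp: bounded_iff)
  then have "bdd_above (range (\<lambda>y. norm (f y)))" by (auto intro: bdd_aboveI2)
  then show ?thesis unfolding supnorm_def using cSUP_upper[of x UNIV "\<lambda>y. norm (f y)"] by simp
qed

lemma supnorm_le:
  assumes "\<And>x. norm (f x) \<le> B"
  shows "supnorm f \<le> B"
  unfolding supnorm_def by (rule cSUP_least) (auto intro: assms)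

lemma supnorm_nonneg:
  fixes f :: "'a::topological_space \<Rightarrow> complex"
  assumes "compact (UNIV::'a set)" "f \<in> CK"
  shows "0 \<le> supnorm f"
  using supnorm_ge[OF assms, of undefined] norm_ge_zero order_trans by blast

section \<open>Linear functionals\<close>

lemma lin_add: "lin_on_CK \<phi> \<Longrightarrow> f \<in> CK \<Longrightarrow> g \<in> CK \<Longrightarrow> \<phi> (\<lambda>x. f x + g x) = \<phi> f + \<phi> g"
  by (simp add: lin_on_CK_def)

lemma lin_cmult: "lin_on_CK \<phi> \<Longrightarrow> f \<in> CK \<Longrightarrow> \<phi> (\<lambda>x. c * f x) = c * \<phi> f"
  by (simp add: lin_on_CK_def)

lemma lin_uminus: "lin_on_CK \<phi> \<Longrightarrow> f \<in> CK \<Longrightarrow> \<phi> (\<lambda>x. - f x) = - \<phi> f"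
  using lin_cmult[of \<phi> f "-1"] by simp

lemma lin_diff: "lin_on_CK \<phi> \<Longrightarrow> f \<in> CK \<Longrightarrow> g \<in> CK \<Longrightarrow> \<phi> (\<lambda>x. f x - g x) = \<phi> f - \<phi> g"
proof -
  assume a: "lin_on_CK \<phi>" "f \<in> CK" "g \<in> CK"
  have "\<phi> (\<lambda>x. f x - g x) = \<phi> (\<lambda>x. f x + (\<lambda>x. - g x) x)" by simp
  also have "\<dots> = \<phi> f + \<phi> (\<lambda>x. - g x)"
    using a by (intro lin_add) (auto intro: CK_cmult[of g "-1", simplified])
  finally show ?thesis using lin_uminus[OF a(1,3)] by simp
qed

lemma lin_zero: "lin_on_CK \<phi> \<Longrightarrow> \<phi> (\<lambda>x. 0) = 0"
  using lin_cmult[of \<phi> "\<lambda>_. 1" 0] by simp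

lemma lin_constc: "lin_on_CK \<phi> \<Longrightarrow> \<phi> (\<lambda>x. c) = c * \<phi> (\<lambda>_. 1)"
  using lin_cmult[of \<phi> "\<lambda>_. 1" c] by simp

lemma lin_sum:
  assumes "lin_on_CK \<phi>" "finite D" "\<And>i. i \<in> D \<Longrightarrow> g i \<in> CK"
  shows "\<phi> (\<lambda>x. \<Sum>i\<in>D. g i x) = (\<Sum>i\<in>D. \<phi> (g i))"
  using assms(2,3)
proof (induction D rule: finite_induct)
  case empty
  then show ?case using lin_zero[OF assms(1)] by simp
next
  case (insert a D)
  have ck: "(\<lambda>x. \<Sum>i\<in>D. g i x) \<in> CK"
    using insert unfolding CK_def mem_Collect_eq by (intro continuous_on_sum) auto
  have "\<phi> (\<lambda>x. \<Sum>i\<in>insert a D. g i x) = \<phi> (\<lambda>x. g a x + (\<Sum>i\<in>D. g i x))"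
    using insert by simp
  also have "\<dots> = \<phi> (g a) + \<phi> (\<lambda>x. \<Sum>i\<in>D. g i x)"
    using lin_add[OF assms(1), of "g a" "\<lambda>x. \<Sum>i\<in>D. g i x"] insert ck by simp
  finally show ?case using insert by simp
qed

definition pos :: "(('a::topological_space \<Rightarrow> complex) \<Rightarrow> complex) \<Rightarrow> bool" where
  "pos \<phi> \<longleftrightarrow> lin_on_CK \<phi> \<and> positive_fun \<phi>"

definition nnf :: "('a::topological_space \<Rightarrow> complex) \<Rightarrow> bool" where
  "nnf f \<longleftrightarrow> f \<in> CK \<and> (\<forall>x. f x = complex_of_real (Re (f x)) \<and> 0 \<le> Re (f x))"

lemma prob_pos: "prob_fun \<phi> \<Longrightarrow> pos \<phi>"
  by (simp add: prob_fun_def pos_def)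

lemma pos_lin: "pos \<phi> \<Longrightarrow> lin_on_CK \<phi>"
  by (simp add: pos_def)

lemma pos_nnf: "pos \<phi> \<Longrightarrow> nnf f \<Longrightarrow> \<phi> f = complex_of_real (Re (\<phi> f)) \<and> 0 \<le> Re (\<phi> f)"
  unfolding pos_def nnf_def positive_fun_def by blast

lemma nnf_ofreal: "continuous_on UNIV r \<Longrightarrow> (\<And>x. 0 \<le> r x) \<Longrightarrow> nnf (\<lambda>x. complex_of_real (r x))"
  unfolding nnf_def by (auto intro: CK_ofreal)

lemma nnf_real: "nnf f \<Longrightarrow> f = (\<lambda>x. complex_of_real (Re (f x)))"
  unfolding nnf_def by (auto intro!: ext)

lemma nnf_CK: "nnf f \<Longrightarrow> f \<in> CK" by (simp add: nnf_def)

lemma pos_real: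
  assumes "pos \<phi>" "continuous_on UNIV r"
  shows "\<phi> (\<lambda>x. complex_of_real (r x)) = complex_of_real (Re (\<phi> (\<lambda>x. complex_of_real (r x))))"
proof -
  let ?p = "\<lambda>x. complex_of_real (max (r x) 0)" and ?n = "\<lambda>x. complex_of_real (max (- r x) 0)"
  have c1: "continuous_on UNIV (\<lambda>x. max (r x) 0)" "continuous_on UNIV (\<lambda>x. max (- r x) 0)"
    using assms(2) by (auto intro!: continuous_intros)
  have n1: "nnf ?p" "nnf ?n" using c1 by (auto intro!: nnf_ofreal)
  have e: "(\<lambda>x. complex_of_real (r x)) = (\<lambda>x. ?p x - ?n x)"
    by (rule ext) (simp add: max_def)
  have "\<phi> (\<lambda>x. complex_of_real (r x)) = \<phi> ?p - \<phi> ?n"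
    unfolding e using n1 by (intro lin_diff pos_lin assms nnf_CK)
  moreover have "\<phi> ?p = complex_of_real (Re (\<phi> ?p))" "\<phi> ?n = complex_of_real (Re (\<phi> ?n))"
    using pos_nnf[OF assms(1)] n1 by blast+
  ultimately show ?thesis by (metis Re_complex_of_real of_real_diff)
qed

lemma pos_mono:
  assumes "pos \<phi>" "continuous_on UNIV r" "continuous_on UNIV s" "\<And>x. r x \<le> s x"
  shows "Re (\<phi> (\<lambda>x. complex_of_real (r x))) \<le> Re (\<phi> (\<lambda>x. complex_of_real (s x)))"
proof -
  have "nnf (\<lambda>x. complex_of_real (s x - r x))"
    using assms by (intro nnf_ofreal continuous_intros) auto
  then have "0 \<le> Re (\<phi> (\<lambda>x. complex_of_real (s x - r x)))" using pos_nnf[OF assms(1)] by blast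
  moreover have "\<phi> (\<lambda>x. complex_of_real (s x - r x)) = \<phi> (\<lambda>x. complex_of_real (s x)) - \<phi> (\<lambda>x. complex_of_real (r x))"
    using lin_diff[OF pos_lin[OF assms(1)] CK_ofreal[OF assms(3)] CK_ofreal[OF assms(2)]] by simp
  ultimately show ?thesis by simp
qed

lemma decomp_fun: "f = (\<lambda>x. complex_of_real (Re (f x)) + \<i> * complex_of_real (Im (f x)))"
  by (rule ext) (simp add: complex_eq_iff)

lemma pos_Re:
  assumes "pos \<phi>" "f \<in> CK"
  shows "\<phi> (\<lambda>x. complex_of_real (Re (f x))) = complex_of_real (Re (\<phi> f))"
    and "\<phi> (\<lambda>x. complex_of_real (Im (f x))) = complex_of_real (Im (\<phi> f))"
proof -
  have c: "(\<lambda>x. complex_of_real (Re (f x))) \<in> CK" "(\<lambda>x. complex_of_real (Im (f x))) \<in> CK"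
    using assms by (auto intro!: CK_ofreal CK_Re CK_Im)
  have "\<phi> f = \<phi> (\<lambda>x. complex_of_real (Re (f x)) + \<i> * complex_of_real (Im (f x)))"
    using decomp_fun[of f] by simp
  also have "\<dots> = \<phi> (\<lambda>x. complex_of_real (Re (f x))) + \<i> * \<phi> (\<lambda>x. complex_of_real (Im (f x)))"
    using c lin_add[OF pos_lin[OF assms(1)]] lin_cmult[OF pos_lin[OF assms(1)]] CK_cmult by metis
  finally have eq: "\<phi> f = \<phi> (\<lambda>x. complex_of_real (Re (f x))) + \<i> * \<phi> (\<lambda>x. complex_of_real (Im (f x)))" .
  have r1: "\<phi> (\<lambda>x. complex_of_real (Re (f x))) = complex_of_real (Re (\<phi> (\<lambda>x. complex_of_real (Re (f x)))))"
    using pos_real[OF assms(1) CK_Re[OF assms(2)]] .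
  have r2: "\<phi> (\<lambda>x. complex_of_real (Im (f x))) = complex_of_real (Re (\<phi> (\<lambda>x. complex_of_real (Im (f x)))))"
    using pos_real[OF assms(1) CK_Im[OF assms(2)]] .
  obtain A B where AB: "\<phi> (\<lambda>x. complex_of_real (Re (f x))) = complex_of_real A"
     "\<phi> (\<lambda>x. complex_of_real (Im (f x))) = complex_of_real B" using r1 r2 by blast
  have "\<phi> f = complex_of_real A + \<i> * complex_of_real B" using eq AB by simp
  then have "Re (\<phi> f) = A" "Im (\<phi> f) = B" by simp_all
  then show "\<phi> (\<lambda>x. complex_of_real (Re (f x))) = complex_of_real (Re (\<phi> f))"
    and "\<phi> (\<lambda>x. complex_of_real (Im (f x))) = complex_of_real (Im (\<phi> f))" using AB by simp_all
qed

lemma pos_dom: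
  assumes "pos \<phi>" "f \<in> CK" "continuous_on UNIV h" "\<And>x. norm (f x) \<le> h x"
  shows "norm (\<phi> f) \<le> 2 * Re (\<phi> (\<lambda>x. complex_of_real (h x)))"
proof -
  let ?H = "Re (\<phi> (\<lambda>x. complex_of_real (h x)))"
  have bRe: "\<bar>Re (\<phi> (\<lambda>x. complex_of_real (g x)))\<bar> \<le> ?H"
    if g: "continuous_on UNIV g" "\<And>x. \<bar>g x\<bar> \<le> h x" for g
  proof -
    have "Re (\<phi> (\<lambda>x. complex_of_real (g x))) \<le> ?H"
      by (rule pos_mono[OF assms(1) g(1) assms(3)]) (meson abs_le_D1 g(2))
    moreover have "Re (\<phi> (\<lambda>x. complex_of_real (- h x))) \<le> Re (\<phi> (\<lambda>x. complex_of_real (g x)))"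
      by (rule pos_mono[OF assms(1) _ g(1)]) (use g(2) assms(3) in \<open>auto intro: continuous_intros simp: abs_le_iff, smt (verit) abs_le_iff g(2)\<close>)
    moreover have "\<phi> (\<lambda>x. complex_of_real (- h x)) = - \<phi> (\<lambda>x. complex_of_real (h x))"
      using lin_uminus[OF pos_lin[OF assms(1)] CK_ofreal[OF assms(3)]] by simp
    ultimately show ?thesis by simp
  qed
  have a: "\<bar>Re (\<phi> (\<lambda>x. complex_of_real (Re (f x))))\<bar> \<le> ?H"
    using CK_Re[OF assms(2)] assms(4) abs_Re_le_cmod order_trans by (intro bRe) blast+
  have b: "\<bar>Re (\<phi> (\<lambda>x. complex_of_real (Im (f x))))\<bar> \<le> ?H"
    using CK_Im[OF assms(2)] assms(4) abs_Im_le_cmod order_trans by (intro bRe) blast+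
  have "norm (\<phi> f) \<le> \<bar>Re (\<phi> f)\<bar> + \<bar>Im (\<phi> f)\<bar>" by (rule cmod_le)
  also have "\<dots> \<le> 2 * ?H" using a b pos_Re[OF assms(1,2)] by simp
  finally show ?thesis .
qed

lemma pos_bound:
  fixes \<phi> :: "('a::topological_space \<Rightarrow> complex) \<Rightarrow> complex"
  assumes "compact (UNIV::'a set)" "pos \<phi>" "f \<in> CK"
  shows "norm (\<phi> f) \<le> (2 * Re (\<phi> (\<lambda>_. 1))) * supnorm f"
proof -
  have "norm (\<phi> f) \<le> 2 * Re (\<phi> (\<lambda>x. complex_of_real (supnorm f)))"
    by (rule pos_dom[OF assms(2,3)]) (auto intro: supnorm_ge[OF assms(1,3)])
  also have "\<phi> (\<lambda>x. complex_of_real (supnorm f)) = complex_of_real (supnorm f) * \<phi> (\<lambda>_. 1)"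
    using lin_constc[OF pos_lin[OF assms(2)]] by blast
  finally show ?thesis by (simp add: mult.commute)
qed

lemma pos_cmeasure:
  fixes \<phi> :: "('a::topological_space \<Rightarrow> complex) \<Rightarrow> complex"
  assumes "compact (UNIV::'a set)" "pos \<phi>"
  shows "cmeasure \<phi>"
  unfolding cmeasure_def using pos_bound[OF assms] pos_lin[OF assms(2)] by blast

lemma cmeasure_bound:
  fixes \<phi> :: "('a::topological_space \<Rightarrow> complex) \<Rightarrow> complex"
  assumes "compact (UNIV::'a set)" "cmeasure \<phi>"
  obtains B where "B \<ge> 0" "\<And>f. f \<in> CK \<Longrightarrow> norm (\<phi> f) \<le> B * supnorm f"
proof -
  obtain B where B: "\<forall>f\<in>CK. norm (\<phi> f) \<le> B * supnorm f" using assms(2) by (auto simp: cmeasure_def)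
  show ?thesis
  proof (rule that[of "max B 0"])
    fix f :: "'a \<Rightarrow> complex" assume f: "f \<in> CK"
    have "B * supnorm f \<le> max B 0 * supnorm f"
      using supnorm_nonneg[OF assms(1) f] by (intro mult_right_mono) auto
    then show "norm (\<phi> f) \<le> max B 0 * supnorm f" using B f by force
  qed simp
qed

lemma cmeasure_lin: "cmeasure \<phi> \<Longrightarrow> lin_on_CK \<phi>"
  by (simp add: cmeasure_def)

section \<open>Topology of the compact Hausdorff space\<close>

lemma Hausdorff_eucl: "Hausdorff_space (euclidean::'a::t2_space topology)"
  unfolding Hausdorff_space_def
proof (intro allI impI)
  fix x y :: 'a
  assume "x \<in> topspace euclidean \<and> y \<in> topspace euclidean \<and> x \<noteq> y"
  then have "x \<noteq> y" by simp
  from hausdorff[OF this] obtain U V where "open U" "open V" "x \<in> U" "y \<in> V" "U \<inter> V = {}" by blast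
  then show "\<exists>U V. openin euclidean U \<and> openin euclidean V \<and> x \<in> U \<and> y \<in> V \<and> disjnt U V"
    by (auto simp: disjnt_def)
qed

lemma urysohn_K:
  fixes S T :: "'a::t2_space set"
  assumes "compact (UNIV::'a set)" "closed S" "closed T" "S \<inter> T = {}"
  obtains f :: "'a \<Rightarrow> real" where "continuous_on UNIV f" "\<forall>x. 0 \<le> f x \<and> f x \<le> 1"
    "\<forall>x\<in>S. f x = 0" "\<forall>x\<in>T. f x = 1"
proof -
  have "normal_space (euclidean :: 'a topology)"
    apply (rule compact_Hausdorff_or_regular_imp_normal_space)
    using assms(1) apply (simp add: compact_space_def compactin_euclidean_iff)
    using Hausdorff_eucl by blast
  then obtain f where f: "continuous_map euclidean (top_of_set {0..1::real}) f" "f ` S \<subseteq> {0}" "f ` T \<subseteq> {1}"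
    using Urysohn_lemma[of euclidean S T 0 1] assms by (auto simp: disjnt_def)
  show ?thesis
    apply (rule that[of f])
    using f by (auto simp: continuous_map_in_subtopology)
qed

lemma bump:
  fixes U :: "'a::t2_space set"
  assumes cpt: "compact (UNIV::'a set)" and "open U" "v \<in> U"
  obtains r :: "'a \<Rightarrow> real" where "continuous_on UNIV r" "\<forall>x. 0 \<le> r x" "r v = 1"
    "closure {x. r x \<noteq> 0} \<subseteq> U"
proof -
  obtain f :: "'a \<Rightarrow> real" where f: "continuous_on UNIV f" "\<forall>x. 0 \<le> f x \<and> f x \<le> 1"
    "\<forall>x\<in>-U. f x = 0" "\<forall>x\<in>{v}. f x = 1"
    using urysohn_K[OF cpt, of "-U" "{v}"] assms by auto
  have cl: "closed {x. f x \<le> 1/2}" using f(1) by (intro closed_Collect_le continuous_intros)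
  obtain g :: "'a \<Rightarrow> real" where g: "continuous_on UNIV g" "\<forall>x. 0 \<le> g x \<and> g x \<le> 1"
    "\<forall>x\<in>{x. f x \<le> 1/2}. g x = 0" "\<forall>x\<in>{v}. g x = 1"
    using urysohn_K[OF cpt cl, of "{v}"] f by auto
  have "closure {x. g x \<noteq> 0} \<subseteq> {x. 1/2 \<le> f x}"
    apply (rule closure_minimal)
    using g(3) apply force
    using f(1) by (intro closed_Collect_le continuous_intros)
  also have "\<dots> \<subseteq> U" using f(3) by force
  finally show ?thesis using g by (intro that[of g]) auto
qed

section \<open>Supports\<close>

definition nullset :: "(('a::topological_space \<Rightarrow> complex) \<Rightarrow> complex) \<Rightarrow> 'a set \<Rightarrow> bool" where
  "nullset \<phi> U \<longleftrightarrow> (\<forall>f\<in>CK. closure {y. f y \<noteq> 0} \<subseteq> U \<longrightarrow> \<phi> f = 0)"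

lemma msupp_alt: "msupp \<phi> = - \<Union>{U. open U \<and> nullset \<phi> U}"
  unfolding msupp_def nullset_def ..

lemma msupp_closed: "closed (msupp \<phi>)"
  unfolding msupp_alt by (intro open_Union closed_Compl) auto

lemma notin_msupp: "v \<notin> msupp \<phi> \<longleftrightarrow> (\<exists>U. open U \<and> v \<in> U \<and> nullset \<phi> U)"
  unfolding msupp_alt by blast

lemma msupp_cong:
  assumes "\<And>f. f \<in> CK \<Longrightarrow> \<phi> f = \<psi> f" shows "msupp \<phi> = msupp \<psi>"
proof -
  have "nullset \<phi> = nullset \<psi>" by (rule ext) (simp add: nullset_def assms)
  then show ?thesis by (simp add: msupp_alt)
qed

lemma closure_ofreal: "{x. complex_of_real (r x) \<noteq> 0} = {x. r x \<noteq> 0}"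
  by simp

lemma msupp_witness:
  fixes \<phi> :: "('a::t2_space \<Rightarrow> complex) \<Rightarrow> complex"
  assumes cpt: "compact (UNIV::'a set)" and "v \<notin> msupp \<phi>"
  obtains r :: "'a \<Rightarrow> real" where "continuous_on UNIV r" "\<forall>x. 0 \<le> r x" "r v = 1"
    "\<phi> (\<lambda>x. complex_of_real (r x)) = 0"
proof -
  obtain U where U: "open U" "v \<in> U" "nullset \<phi> U" using notin_msupp[THEN iffD1, OF assms(2)] by blast
  obtain r :: "'a \<Rightarrow> real" where r: "continuous_on UNIV r" "\<forall>x. 0 \<le> r x" "r v = 1" "closure {x. r x \<noteq> 0} \<subseteq> U"
    using bump[OF cpt U(1,2)] by blast
  have cl: "closure {y. complex_of_real (r y) \<noteq> 0} \<subseteq> U" using r(4) by simp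
  have z: "\<phi> (\<lambda>x. complex_of_real (r x)) = 0"
    using U(3)[unfolded nullset_def, rule_format, OF CK_ofreal[OF r(1)] cl] .
  show ?thesis using r(1,2,3) z by (rule that)
qed

lemma msupp_pos:
  fixes \<phi> :: "('a::t2_space \<Rightarrow> complex) \<Rightarrow> complex"
  assumes cpt: "compact (UNIV::'a set)" and ph: "pos \<phi>" and v: "v \<in> msupp \<phi>"
    and f: "nnf f" "f v \<noteq> 0"
  shows "\<phi> f \<noteq> 0"
proof
  assume z: "\<phi> f = 0"
  define c where "c = Re (f v)"
  have fr: "f = (\<lambda>x. complex_of_real (Re (f x)))" using nnf_real[OF f(1)] .
  have fall: "\<forall>x. f x = complex_of_real (Re (f x)) \<and> 0 \<le> Re (f x)" using f(1) unfolding nnf_def by blast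
  have fx: "\<And>x. complex_of_real (Re (f x)) = f x" using fall by metis
  have "f v = complex_of_real c" "0 \<le> c" using fall unfolding c_def by blast+
  then have cpos: "c > 0" using f(2) by (cases "c = 0") auto
  have fc: "continuous_on UNIV (\<lambda>x. Re (f x))" using CK_Re[OF nnf_CK[OF f(1)]] .
  have fnn: "\<And>x. 0 \<le> Re (f x)" using fall by blast
  define U where "U = {x. c/2 < Re (f x)}"
  have Uo: "open U" unfolding U_def by (intro open_Collect_less continuous_on_const fc)
  have vU: "v \<in> U" using cpos unfolding U_def c_def by simp
  have "nullset \<phi> U"
    unfolding nullset_def
  proof (intro ballI impI)
    fix g :: "'a \<Rightarrow> complex" assume g: "g \<in> CK" "closure {y. g y \<noteq> 0} \<subseteq> U"
    define k where "k = 2 * supnorm g / c"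
    have k0: "0 \<le> k" unfolding k_def using supnorm_nonneg[OF cpt g(1)] cpos by simp
    have bd: "norm (g x) \<le> k * Re (f x)" for x
    proof (cases "x \<in> U")
      case True
      then have "c/2 < Re (f x)" by (simp add: U_def)
      then have "k * (c/2) \<le> k * Re (f x)" using k0 by (intro mult_left_mono) auto
      moreover have "k * (c/2) = supnorm g" unfolding k_def using cpos by simp
      ultimately show ?thesis using supnorm_ge[OF cpt g(1), of x] by simp
    next
      case False
      have "{y. g y \<noteq> 0} \<subseteq> U" by (rule order_trans[OF closure_subset g(2)])
      then have "g x = 0" using False by blast
      then show ?thesis using k0 fnn by simp
    qed
    have "norm (\<phi> g) \<le> 2 * Re (\<phi> (\<lambda>x. complex_of_real (k * Re (f x))))"
      by (rule pos_dom[OF ph g(1)]) (rule continuous_on_mult[OF continuous_on_const fc], rule bd)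
    also have "\<phi> (\<lambda>x. complex_of_real (k * Re (f x))) = complex_of_real k * \<phi> f"
      using lin_cmult[OF pos_lin[OF ph] nnf_CK[OF f(1)], of "complex_of_real k"]
      by (simp add: fx)
    finally show "\<phi> g = 0" using z by simp
  qed
  then have "v \<notin> msupp \<phi>" using Uo vU notin_msupp[of v \<phi>] by blast
  then show False using v by blast
qed

lemma compact_closed_K:
  fixes C :: "'a::topological_space set"
  assumes "compact (UNIV::'a set)" "closed C" shows "compact C"
  using compact_Int_closed[OF assms] by simp

lemma zero_open:
  fixes \<phi> :: "('a::t2_space \<Rightarrow> complex) \<Rightarrow> complex"
  assumes cpt: "compact (UNIV::'a set)" and ph: "pos \<phi>" and f: "f \<in> CK"
    and dis: "closure {y. f y \<noteq> 0} \<inter> msupp \<phi> = {}"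
  shows "\<phi> f = 0"
proof (cases "closure {y. f y \<noteq> 0} = {}")
  case True
  then have "f = (\<lambda>x. 0)" by (auto intro!: ext)
  then show ?thesis using lin_zero[OF pos_lin[OF ph]] by simp
next
  case ne: False
  define C where "C = closure {y. f y \<noteq> 0}"
  have Cc: "compact C" unfolding C_def by (rule compact_closed_K[OF cpt]) simp
  have "\<forall>c\<in>C. \<exists>r. continuous_on UNIV r \<and> (\<forall>x. 0 \<le> r x) \<and> r c = 1 \<and> \<phi> (\<lambda>x. complex_of_real (r x)) = 0"
  proof
    fix c assume "c \<in> C"
    then have "c \<notin> msupp \<phi>" using dis C_def by blast
    from msupp_witness[OF cpt this] show "\<exists>r. continuous_on UNIV r \<and> (\<forall>x. 0 \<le> r x) \<and> r c = 1 \<and> \<phi> (\<lambda>x. complex_of_real (r x)) = 0"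
      by metis
  qed
  then obtain R :: "'a \<Rightarrow> 'a \<Rightarrow> real" where R: "\<And>c. c \<in> C \<Longrightarrow> continuous_on UNIV (R c) \<and> (\<forall>x. 0 \<le> R c x) \<and> R c c = 1 \<and> \<phi> (\<lambda>x. complex_of_real (R c x)) = 0"
    by metis
  have R1: "continuous_on UNIV (R c)" if "c \<in> C" for c using R[OF that] by blast
  have R2: "0 \<le> R c x" if "c \<in> C" for c x using R[OF that] by blast
  have R3: "R c c = 1" if "c \<in> C" for c using R[OF that] by blast
  have R4: "\<phi> (\<lambda>x. complex_of_real (R c x)) = 0" if "c \<in> C" for c using R[OF that] by blast
  have "C \<subseteq> (\<Union>c\<in>C. {x. 0 < R c x})"
  proof
    fix x assume "x \<in> C" then show "x \<in> (\<Union>c\<in>C. {x. 0 < R c x})" using R3[of x] by (intro UN_I[of x]) auto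
  qed
  moreover have "\<And>c. c \<in> C \<Longrightarrow> open {x. 0 < R c x}"
    using R1 by (intro open_Collect_less continuous_on_const) auto
  ultimately obtain D :: "'a set" where D: "D \<subseteq> C" "finite D" "C \<subseteq> (\<Union>c\<in>D. {x. 0 < R c x})"
    using compactE_image[OF Cc, of C "\<lambda>c. {x. 0 < R c x}"] by metis
  define h where "h = (\<lambda>x. \<Sum>c\<in>D. R c x)"
  have hc: "continuous_on UNIV h" unfolding h_def using R1 D(1) by (intro continuous_on_sum) auto
  have hnn: "0 \<le> h x" for x unfolding h_def using R2 D(1) by (intro sum_nonneg) auto
  have hpos: "0 < h x" if xC: "x \<in> C" for x
  proof -
    obtain c :: 'a where c: "c \<in> D" "0 < R c x" using D(3) xC by blast
    have nn: "\<And>i. i \<in> D \<Longrightarrow> 0 \<le> R i x" using R2 D(1) by blast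
    show ?thesis unfolding h_def by (rule sum_pos2[where f="\<lambda>c. R c x", OF D(2) c nn])
  qed
  have hz: "\<phi> (\<lambda>x. complex_of_real (h x)) = 0"
  proof -
    have "\<phi> (\<lambda>x. complex_of_real (h x)) = \<phi> (\<lambda>x. \<Sum>c\<in>D. complex_of_real (R c x))"
      unfolding h_def by simp
    also have "\<dots> = (\<Sum>c\<in>D. \<phi> (\<lambda>x. complex_of_real (R c x)))"
      using R1 D(1,2) by (intro lin_sum pos_lin ph) (auto intro: CK_ofreal)
    also have "\<dots> = 0" using R4 D(1) by (intro sum.neutral) auto
    finally show ?thesis .
  qed
  have Cne: "C \<noteq> {}" using ne C_def by simp
  obtain x0 :: 'a where x0: "x0 \<in> C" "\<And>y. y \<in> C \<Longrightarrow> h x0 \<le> h y"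
    using continuous_attains_inf[OF Cc Cne continuous_on_subset[OF hc]] by blast
  define \<delta> where "\<delta> = h x0"
  have dpos: "\<delta> > 0" using hpos x0 \<delta>_def by simp
  define k where "k = supnorm f / \<delta>"
  have k0: "0 \<le> k" unfolding k_def using supnorm_nonneg[OF cpt f] dpos by simp
  have bd: "norm (f x) \<le> k * h x" for x
  proof (cases "x \<in> C")
    case True
    then have "k * \<delta> \<le> k * h x" using x0 k0 \<delta>_def by (intro mult_left_mono) auto
    moreover have "k * \<delta> = supnorm f" unfolding k_def using dpos by simp
    ultimately show ?thesis using supnorm_ge[OF cpt f, of x] by simp
  next
    case False
    have "{y. f y \<noteq> 0} \<subseteq> C" unfolding C_def by (rule closure_subset)
    then have "f x = 0" using False by blast
    then show ?thesis using k0 hnn by simp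
  qed
  have "norm (\<phi> f) \<le> 2 * Re (\<phi> (\<lambda>x. complex_of_real (k * h x)))"
    by (rule pos_dom[OF ph f]) (rule continuous_on_mult[OF continuous_on_const hc], rule bd)
  also have "\<phi> (\<lambda>x. complex_of_real (k * h x)) = complex_of_real k * \<phi> (\<lambda>x. complex_of_real (h x))"
    using lin_cmult[OF pos_lin[OF ph] CK_ofreal[OF hc], of "complex_of_real k"] by simp
  finally show ?thesis using hz by simp
qed

lemma zero_nnf:
  fixes \<phi> :: "('a::t2_space \<Rightarrow> complex) \<Rightarrow> complex"
  assumes cpt: "compact (UNIV::'a set)" and ph: "pos \<phi>" and f: "nnf f"
    and van: "\<And>x. x \<in> msupp \<phi> \<Longrightarrow> f x = 0"
  shows "\<phi> f = 0"
proof -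
  define r where "r = (\<lambda>x. Re (f x))"
  have fr: "f = (\<lambda>x. complex_of_real (r x))" using nnf_real[OF f] r_def by simp
  have rc: "continuous_on UNIV r" unfolding r_def using CK_Re[OF nnf_CK[OF f]] .
  have rnn: "0 \<le> r x" for x using f unfolding nnf_def r_def by blast
  have rz: "r x = 0" if "x \<in> msupp \<phi>" for x using van[OF that] r_def by simp
  define b where "b = Re (\<phi> (\<lambda>_. 1))"
  have b0: "0 \<le> b" unfolding b_def using pos_nnf[OF ph nnf_ofreal[of "\<lambda>_. 1"]] by simp
  have le: "Re (\<phi> f) \<le> \<epsilon> * b" if ep: "\<epsilon> > 0" for \<epsilon>
  proof -
    define s where "s = (\<lambda>x. max (r x - \<epsilon>) 0)"
    have sc: "continuous_on UNIV s" unfolding s_def using rc by (intro continuous_intros)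
    have "closure {x. s x \<noteq> 0} \<subseteq> {x. \<epsilon> \<le> r x}"
      apply (rule closure_minimal)
       apply (force simp: s_def)
      using rc by (intro closed_Collect_le continuous_intros)
    moreover have "{x. \<epsilon> \<le> r x} \<inter> msupp \<phi> = {}" using rz ep by force
    ultimately have dis: "closure {x. complex_of_real (s x) \<noteq> 0} \<inter> msupp \<phi> = {}"
      by auto
    have s0: "\<phi> (\<lambda>x. complex_of_real (s x)) = 0"
      by (rule zero_open[OF cpt ph CK_ofreal[OF sc] dis])
    have "Re (\<phi> (\<lambda>x. complex_of_real (r x))) \<le> Re (\<phi> (\<lambda>x. complex_of_real (s x + \<epsilon>)))"
      by (rule pos_mono[OF ph rc]) (rule continuous_on_add[OF sc continuous_on_const], simp add: s_def)
    also have "\<phi> (\<lambda>x. complex_of_real (s x + \<epsilon>)) = \<phi> (\<lambda>x. complex_of_real (s x)) + \<phi> (\<lambda>x. complex_of_real \<epsilon>)"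
      using lin_add[OF pos_lin[OF ph] CK_ofreal[OF sc], of "\<lambda>x. complex_of_real \<epsilon>"] by simp
    also have "\<phi> (\<lambda>x. complex_of_real \<epsilon>) = complex_of_real \<epsilon> * \<phi> (\<lambda>_. 1)"
      by (rule lin_constc[OF pos_lin[OF ph]])
    finally show ?thesis using s0 fr b_def by simp
  qed
  have ge: "0 \<le> Re (\<phi> f)" using pos_nnf[OF ph f] by simp
  have "Re (\<phi> f) \<le> 0"
  proof (rule ccontr)
    assume "\<not> Re (\<phi> f) \<le> 0"
    then have a: "Re (\<phi> f) > 0" by simp
    have "Re (\<phi> f) \<le> (Re (\<phi> f) / (b + 1)) * b" using le[of "Re (\<phi> f) / (b + 1)"] a b0 by simp
    also have "\<dots> < Re (\<phi> f)" using a b0 by (simp add: field_simps)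
    finally show False by simp
  qed
  then have "Re (\<phi> f) = 0" using ge by simp
  then show ?thesis using pos_nnf[OF ph f] by (metis of_real_0)
qed

lemma msupp_nonempty:
  fixes \<phi> :: "('a::t2_space \<Rightarrow> complex) \<Rightarrow> complex"
  assumes cpt: "compact (UNIV::'a set)" and ph: "pos \<phi>" and "\<phi> (\<lambda>_. 1) \<noteq> 0"
  shows "msupp \<phi> \<noteq> {}"
  using zero_open[OF cpt ph CK_const[of 1]] assms(3) by auto

section \<open>Continuity of slices and Fubini\<close>

definition joint :: "('a::topological_space \<Rightarrow> 'b::topological_space \<Rightarrow> complex) \<Rightarrow> bool" where
  "joint G \<longleftrightarrow> continuous_on UNIV (\<lambda>p. G (fst p) (snd p))"

lemma joint_slice2: "joint G \<Longrightarrow> (\<lambda>y. G x y) \<in> CK"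
proof -
  assume G: "joint G"
  have "continuous_on UNIV (\<lambda>y. (x, y))" by (intro continuous_intros)
  from continuous_on_compose2[OF G[unfolded joint_def] this] show ?thesis
    by (simp add: CK_def)
qed

lemma joint_slice1: "joint G \<Longrightarrow> (\<lambda>x. G x y) \<in> CK"
proof -
  assume G: "joint G"
  have "continuous_on UNIV (\<lambda>x. (x, y))" by (intro continuous_intros)
  from continuous_on_compose2[OF G[unfolded joint_def] this] show ?thesis
    by (simp add: CK_def)
qed

lemma unif_slice:
  fixes G :: "'a::topological_space \<Rightarrow> 'b::topological_space \<Rightarrow> complex"
  assumes cpt: "compact (UNIV::'b set)" and G: "joint G" and e: "\<epsilon> > 0"
  shows "\<exists>N. open N \<and> x0 \<in> N \<and> (\<forall>x\<in>N. \<forall>y. norm (G x y - G x0 y) < \<epsilon>)"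
proof -
  define W where "W y = {p. norm (G (fst p) (snd p) - G x0 y) < \<epsilon>/2}" for y
  have Wo: "open (W y)" for y
    unfolding W_def using G[unfolded joint_def]
    by (intro open_Collect_less continuous_intros) auto
  have "\<forall>y. \<exists>A B. open A \<and> open B \<and> x0 \<in> A \<and> y \<in> B \<and> A \<times> B \<subseteq> W y"
  proof
    fix y
    have "(x0, y) \<in> W y" using e by (simp add: W_def)
    from open_prod_elim[OF Wo this] show "\<exists>A B. open A \<and> open B \<and> x0 \<in> A \<and> y \<in> B \<and> A \<times> B \<subseteq> W y"
      by (metis mem_Sigma_iff)
  qed
  then obtain AA :: "'b \<Rightarrow> 'a set" and BB :: "'b \<Rightarrow> 'b set" where
    AB: "\<And>y. open (AA y) \<and> open (BB y) \<and> x0 \<in> AA y \<and> y \<in> BB y \<and> AA y \<times> BB y \<subseteq> W y"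
    by metis
  have "UNIV \<subseteq> (\<Union>y\<in>UNIV. BB y)" using AB by blast
  then obtain Y :: "'b set" where Y: "finite Y" "UNIV \<subseteq> (\<Union>y\<in>Y. BB y)"
    using compactE_image[OF cpt, of UNIV BB] AB by metis
  define N where "N = (\<Inter>y\<in>Y. AA y)"
  have "open N" unfolding N_def using Y(1) AB by (intro open_INT) auto
  moreover have "x0 \<in> N" unfolding N_def using AB by blast
  moreover have "\<forall>x\<in>N. \<forall>y'. norm (G x y' - G x0 y') < \<epsilon>"
  proof (intro ballI allI)
    fix x y' assume x: "x \<in> N"
    obtain y where y: "y \<in> Y" "y' \<in> BB y" using Y(2) by blast
    have "x \<in> AA y" using x y(1) unfolding N_def by blast
    then have "(x, y') \<in> W y" "(x0, y') \<in> W y" using AB[of y] y(2) by blast+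
    then have a: "norm (G x y' - G x0 y) < \<epsilon>/2" and b: "norm (G x0 y' - G x0 y) < \<epsilon>/2"
      by (auto simp: W_def)
    have "norm (G x y' - G x0 y') \<le> norm (G x y' - G x0 y) + norm (G x0 y' - G x0 y)"
      using norm_triangle_ineq4[of "G x y' - G x0 y" "G x0 y' - G x0 y"] by simp
    then show "norm (G x y' - G x0 y') < \<epsilon>" using a b by simp
  qed
  ultimately show ?thesis by blast
qed

lemma L_cont:
  fixes G :: "'a::t2_space \<Rightarrow> 'b::topological_space \<Rightarrow> complex"
    and \<phi> :: "('b \<Rightarrow> complex) \<Rightarrow> complex"
  assumes cpt: "compact (UNIV::'b set)" and ph: "cmeasure \<phi>" and G: "joint G"
  shows "continuous_on UNIV (\<lambda>x. \<phi> (\<lambda>y. G x y))"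
proof -
  obtain B where B: "B \<ge> 0" "\<And>f. f \<in> CK \<Longrightarrow> norm (\<phi> f) \<le> B * supnorm f"
    using cmeasure_bound[OF cpt ph] by blast
  have "isCont (\<lambda>x. \<phi> (\<lambda>y. G x y)) x0" for x0
    unfolding isCont_def tendsto_iff
  proof (intro allI impI)
    fix \<epsilon> :: real assume e: "\<epsilon> > 0"
    define \<delta> where "\<delta> = \<epsilon> / (2 * (B + 1))"
    have d: "\<delta> > 0" unfolding \<delta>_def using e B(1) by simp
    obtain N where N: "open N" "x0 \<in> N" "\<forall>x\<in>N. \<forall>y. norm (G x y - G x0 y) < \<delta>"
      using unif_slice[OF cpt G d] by blast
    have "\<forall>x\<in>N. dist (\<phi> (\<lambda>y. G x y)) (\<phi> (\<lambda>y. G x0 y)) < \<epsilon>"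
    proof
      fix x assume x: "x \<in> N"
      have ck: "(\<lambda>y. G x y) \<in> CK" "(\<lambda>y. G x0 y) \<in> CK" using G by (auto intro: joint_slice2)
      have "\<phi> (\<lambda>y. G x y) - \<phi> (\<lambda>y. G x0 y) = \<phi> (\<lambda>y. G x y - G x0 y)"
        using lin_diff[OF cmeasure_lin[OF ph] ck] by simp
      moreover have "norm (\<phi> (\<lambda>y. G x y - G x0 y)) \<le> B * supnorm (\<lambda>y. G x y - G x0 y)"
        using B(2) CK_diff[OF ck] by blast
      moreover have "supnorm (\<lambda>y. G x y - G x0 y) \<le> \<delta>"
        using N(3) x by (intro supnorm_le) (simp add: less_imp_le)
      ultimately have "norm (\<phi> (\<lambda>y. G x y) - \<phi> (\<lambda>y. G x0 y)) \<le> B * \<delta>"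
        using B(1) by (metis mult_left_mono order_trans)
      also have "B * \<delta> < \<epsilon>" unfolding \<delta>_def using e B(1)
        by (simp add: field_simps) (smt (verit) mult_nonneg_nonneg)
      finally show "dist (\<phi> (\<lambda>y. G x y)) (\<phi> (\<lambda>y. G x0 y)) < \<epsilon>" by (simp add: dist_norm)
    qed
    then show "eventually (\<lambda>x. dist (\<phi> (\<lambda>y. G x y)) (\<phi> (\<lambda>y. G x0 y)) < \<epsilon>) (at x0)"
      unfolding eventually_at_topological using N(1,2) by blast
  qed
  then show ?thesis by (simp add: continuous_at_imp_continuous_on)
qed

lemma L_CK:
  fixes G :: "'a::t2_space \<Rightarrow> 'b::topological_space \<Rightarrow> complex"
  assumes "compact (UNIV::'b set)" "cmeasure \<phi>" "joint G"
  shows "(\<lambda>x. \<phi> (\<lambda>y. G x y)) \<in> CK"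
  using L_cont[OF assms] by (simp add: CK_def)

lemma cont_fst: "continuous_on UNIV a \<Longrightarrow> continuous_on UNIV (\<lambda>p. a (fst p))"
  by (rule continuous_on_compose2[of UNIV a]) (auto intro: continuous_intros)

lemma cont_snd: "continuous_on UNIV a \<Longrightarrow> continuous_on UNIV (\<lambda>p. a (snd p))"
  by (rule continuous_on_compose2[of UNIV a]) (auto intro: continuous_intros)

inductive_set PR :: "('a::topological_space \<times> 'a \<Rightarrow> real) set" where
  PR_base: "continuous_on UNIV a \<Longrightarrow> continuous_on UNIV b \<Longrightarrow> (\<lambda>p. a (fst p) * b (snd p)) \<in> PR"
| PR_add: "f \<in> PR \<Longrightarrow> g \<in> PR \<Longrightarrow> (\<lambda>p. f p + g p) \<in> PR"

lemma PR_cont: "f \<in> PR \<Longrightarrow> continuous_on UNIV f"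
proof (induction rule: PR.induct)
  case (PR_base a b)
  then show ?case using cont_fst[OF PR_base(1)] cont_snd[OF PR_base(2)] by (intro continuous_on_mult)
next
  case (PR_add f g)
  then show ?case by (intro continuous_on_add)
qed

lemma PR_mult:
  assumes "f \<in> PR" "g \<in> PR" shows "(\<lambda>p. f p * g p) \<in> PR"
  using assms
proof (induction f rule: PR.induct)
  case (PR_base a b)
  from PR_base.prems show ?case
  proof (induction g rule: PR.induct)
    case (PR_base c d)
    have eq: "(\<lambda>p. a (fst p) * b (snd p) * (c (fst p) * d (snd p))) =
        (\<lambda>p. (\<lambda>x. a x * c x) (fst p) * (\<lambda>y. b y * d y) (snd p))"
      by (auto simp: algebra_simps)
    have "continuous_on UNIV (\<lambda>x. a x * c x)" "continuous_on UNIV (\<lambda>y. b y * d y)"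
      using PR_base \<open>continuous_on UNIV a\<close> \<open>continuous_on UNIV b\<close> by (auto intro: continuous_on_mult)
    then show ?case unfolding eq by (rule PR.PR_base)
  next
    case (PR_add g1 g2)
    have eq: "(\<lambda>p. a (fst p) * b (snd p) * (g1 p + g2 p)) =
        (\<lambda>p. (\<lambda>p. a (fst p) * b (snd p) * g1 p) p + (\<lambda>p. a (fst p) * b (snd p) * g2 p) p)"
      by (auto simp: algebra_simps)
    show ?case unfolding eq using PR_add.IH by (rule PR.PR_add)
  qed
next
  case (PR_add f1 f2)
  have eq: "(\<lambda>p. (f1 p + f2 p) * g p) = (\<lambda>p. (\<lambda>p. f1 p * g p) p + (\<lambda>p. f2 p * g p) p)"
    by (auto simp: algebra_simps)
  show ?case unfolding eq using PR_add by (intro PR.PR_add) auto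
qed

lemma PR_const: "(\<lambda>_. c) \<in> PR"
  using PR_base[of "\<lambda>_. c" "\<lambda>_. 1"] by simp

lemma PR_sep:
  fixes p q :: "'a::t2_space \<times> 'a"
  assumes cpt: "compact (UNIV::'a set)" and "p \<noteq> q"
  shows "\<exists>f\<in>PR. f p \<noteq> f q"
proof -
  have sep: "\<exists>h :: 'a \<Rightarrow> real. continuous_on UNIV h \<and> h x \<noteq> h y" if "x \<noteq> y" for x y :: 'a
  proof -
    have d: "{x} \<inter> {y} = {}" using that by auto
    obtain h :: "'a \<Rightarrow> real" where h: "continuous_on UNIV h" "\<forall>z. 0 \<le> h z \<and> h z \<le> 1"
      "\<forall>z\<in>{x}. h z = 0" "\<forall>z\<in>{y}. h z = 1"
      by (rule urysohn_K[OF cpt closed_singleton closed_singleton d])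
    then show ?thesis by auto
  qed
  show ?thesis
  proof (cases "fst p = fst q")
    case False
    then obtain h :: "'a \<Rightarrow> real" where h: "continuous_on UNIV h" "h (fst p) \<noteq> h (fst q)" using sep by blast
    have m: "(\<lambda>r. h (fst r) * (\<lambda>_. 1) (snd r)) \<in> PR" using h(1) by (intro PR_base) auto
    show ?thesis by (rule bexI[OF _ m]) (use h(2) in simp)
  next
    case True
    then have "snd p \<noteq> snd q" using assms(2) by (metis prod.expand)
    then obtain h :: "'a \<Rightarrow> real" where h: "continuous_on UNIV h" "h (snd p) \<noteq> h (snd q)" using sep by blast
    have m: "(\<lambda>r. (\<lambda>_. 1) (fst r) * h (snd r)) \<in> PR" using h(1) by (intro PR_base) auto
    show ?thesis by (rule bexI[OF _ m]) (use h(2) in simp)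
  qed
qed

lemma PR_approx:
  fixes g :: "'a::t2_space \<times> 'a \<Rightarrow> real"
  assumes cpt: "compact (UNIV::'a set)" and g: "continuous_on UNIV g" and e: "\<epsilon> > 0"
  shows "\<exists>h\<in>PR. \<forall>p. \<bar>g p - h p\<bar> < \<epsilon>"
proof -
  have cU: "compact (UNIV :: ('a \<times> 'a) set)" using compact_Times[OF cpt cpt] by simp
  interpret function_ring_on "PR :: ('a \<times> 'a \<Rightarrow> real) set" "UNIV"
  proof
    show "compact (UNIV :: ('a \<times> 'a) set)" by (rule cU)
  next
    fix f :: "'a \<times> 'a \<Rightarrow> real" assume "f \<in> PR" then show "continuous_on UNIV f" by (rule PR_cont)
  next
    fix f g :: "'a \<times> 'a \<Rightarrow> real" assume "f \<in> PR" "g \<in> PR" then show "(\<lambda>x. f x + g x) \<in> PR" by (rule PR_add)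
  next
    fix f g :: "'a \<times> 'a \<Rightarrow> real" assume "f \<in> PR" "g \<in> PR" then show "(\<lambda>x. f x * g x) \<in> PR" by (rule PR_mult)
  next
    fix c :: real show "(\<lambda>_. c) \<in> (PR :: ('a \<times> 'a \<Rightarrow> real) set)" by (rule PR_const)
  next
    fix x y :: "'a \<times> 'a" assume "x \<noteq> y" then show "\<exists>f\<in>PR. f x \<noteq> f y" by (rule PR_sep[OF cpt])
  qed
  show ?thesis using Stone_Weierstrass_basic[OF g e] by auto
qed

lemma joint_swap: "joint G \<Longrightarrow> joint (\<lambda>y x. G x y)"
proof -
  assume G: "joint G"
  have "continuous_on UNIV (\<lambda>p::'b \<times> 'a. (snd p, fst p))" by (intro continuous_intros)
  from continuous_on_compose2[OF G[unfolded joint_def] this] show ?thesis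
    by (simp add: joint_def)
qed

lemma jointR: "continuous_on UNIV g \<Longrightarrow> joint (\<lambda>x y. complex_of_real (g (x, y)))"
  unfolding joint_def by (auto intro: continuous_intros)

lemma fubini_PR:
  fixes \<phi> \<psi> :: "('a::t2_space \<Rightarrow> complex) \<Rightarrow> complex"
  assumes cpt: "compact (UNIV::'a set)" and ph: "cmeasure \<phi>" and ps: "cmeasure \<psi>" and g: "g \<in> PR"
  shows "\<phi> (\<lambda>x. \<psi> (\<lambda>y. complex_of_real (g (x, y)))) = \<psi> (\<lambda>y. \<phi> (\<lambda>x. complex_of_real (g (x, y))))"
  using g
proof (induction g rule: PR.induct)
  case (PR_base a b)
  have A: "(\<lambda>x. complex_of_real (a x)) \<in> CK" "(\<lambda>x. complex_of_real (b x)) \<in> CK"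
    using PR_base by (auto intro: CK_ofreal)
  have i1: "\<psi> (\<lambda>y. complex_of_real (a x * b y)) = complex_of_real (a x) * \<psi> (\<lambda>y. complex_of_real (b y))" for x
    using lin_cmult[OF cmeasure_lin[OF ps] A(2), of "complex_of_real (a x)"] by simp
  have i2: "\<phi> (\<lambda>x. complex_of_real (a x * b y)) = complex_of_real (b y) * \<phi> (\<lambda>x. complex_of_real (a x))" for y
    using lin_cmult[OF cmeasure_lin[OF ph] A(1), of "complex_of_real (b y)"] by (simp add: mult.commute)
  have "\<phi> (\<lambda>x. \<psi> (\<lambda>y. complex_of_real (a x * b y))) = \<phi> (\<lambda>x. \<psi> (\<lambda>y. complex_of_real (b y)) * complex_of_real (a x))"
    using i1 by (simp add: mult.commute)
  also have "\<dots> = \<psi> (\<lambda>y. complex_of_real (b y)) * \<phi> (\<lambda>x. complex_of_real (a x))"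
    by (rule lin_cmult[OF cmeasure_lin[OF ph] A(1)])
  also have "\<dots> = \<psi> (\<lambda>y. \<phi> (\<lambda>x. complex_of_real (a x)) * complex_of_real (b y))"
    using lin_cmult[OF cmeasure_lin[OF ps] A(2), of "\<phi> (\<lambda>x. complex_of_real (a x))"] by simp
  also have "\<dots> = \<psi> (\<lambda>y. \<phi> (\<lambda>x. complex_of_real (a x * b y)))"
    using i2 by (simp add: mult.commute)
  finally show ?case by simp
next
  case (PR_add f g)
  have fc: "continuous_on UNIV f" "continuous_on UNIV g" using PR_add(1,2) by (auto intro: PR_cont)
  have J: "joint (\<lambda>x y. complex_of_real (f (x, y)))" "joint (\<lambda>x y. complex_of_real (g (x, y)))"
    using fc by (auto intro: jointR)
  have J': "joint (\<lambda>y x. complex_of_real (f (x, y)))" "joint (\<lambda>y x. complex_of_real (g (x, y)))"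
    using J by (auto intro: joint_swap)
  have s1: "\<psi> (\<lambda>y. complex_of_real (f (x, y) + g (x, y))) = \<psi> (\<lambda>y. complex_of_real (f (x, y))) + \<psi> (\<lambda>y. complex_of_real (g (x, y)))" for x
    using lin_add[OF cmeasure_lin[OF ps] joint_slice2[OF J(1)] joint_slice2[OF J(2)]] by simp
  have s2: "\<phi> (\<lambda>x. complex_of_real (f (x, y) + g (x, y))) = \<phi> (\<lambda>x. complex_of_real (f (x, y))) + \<phi> (\<lambda>x. complex_of_real (g (x, y)))" for y
    using lin_add[OF cmeasure_lin[OF ph] joint_slice1[OF J(1)] joint_slice1[OF J(2)]] by simp
  have "\<phi> (\<lambda>x. \<psi> (\<lambda>y. complex_of_real (f (x, y) + g (x, y)))) =
      \<phi> (\<lambda>x. \<psi> (\<lambda>y. complex_of_real (f (x, y)))) + \<phi> (\<lambda>x. \<psi> (\<lambda>y. complex_of_real (g (x, y))))"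
    unfolding s1 by (rule lin_add[OF cmeasure_lin[OF ph] L_CK[OF cpt ps J(1)] L_CK[OF cpt ps J(2)]])
  also have "\<dots> = \<psi> (\<lambda>y. \<phi> (\<lambda>x. complex_of_real (f (x, y)))) + \<psi> (\<lambda>y. \<phi> (\<lambda>x. complex_of_real (g (x, y))))"
    using PR_add.IH by simp
  also have "\<dots> = \<psi> (\<lambda>y. \<phi> (\<lambda>x. complex_of_real (f (x, y) + g (x, y))))"
    unfolding s2 by (rule lin_add[OF cmeasure_lin[OF ps] L_CK[OF cpt ph J'(1)] L_CK[OF cpt ph J'(2)], symmetric])
  finally show ?case by simp
qed

lemma double_bound:
  fixes \<phi> \<psi> :: "('a::t2_space \<Rightarrow> complex) \<Rightarrow> complex"
  assumes cpt: "compact (UNIV::'a set)" and ps: "cmeasure \<psi>"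
    and Bp: "Bp \<ge> 0" "\<And>f. f \<in> CK \<Longrightarrow> norm (\<phi> f) \<le> Bp * supnorm f"
    and Bq: "Bq \<ge> 0" "\<And>f. f \<in> CK \<Longrightarrow> norm (\<psi> f) \<le> Bq * supnorm f"
    and k: "continuous_on UNIV k" and ke: "\<And>p. \<bar>k p\<bar> \<le> \<epsilon>"
  shows "norm (\<phi> (\<lambda>x. \<psi> (\<lambda>y. complex_of_real (k (x, y))))) \<le> Bp * (Bq * \<epsilon>)"
proof -
  have J: "joint (\<lambda>x y. complex_of_real (k (x, y)))" by (rule jointR[OF k])
  have inner: "norm (\<psi> (\<lambda>y. complex_of_real (k (x, y)))) \<le> Bq * \<epsilon>" for x
  proof -
    have "norm (\<psi> (\<lambda>y. complex_of_real (k (x, y)))) \<le> Bq * supnorm (\<lambda>y. complex_of_real (k (x, y)))"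
      using Bq(2) joint_slice2[OF J] by blast
    also have "\<dots> \<le> Bq * \<epsilon>" using Bq(1) ke by (intro mult_left_mono supnorm_le) auto
    finally show ?thesis .
  qed
  have "norm (\<phi> (\<lambda>x. \<psi> (\<lambda>y. complex_of_real (k (x, y))))) \<le> Bp * supnorm (\<lambda>x. \<psi> (\<lambda>y. complex_of_real (k (x, y))))"
    using Bp(2) L_CK[OF cpt ps J] by blast
  also have "\<dots> \<le> Bp * (Bq * \<epsilon>)" using Bp(1) inner by (intro mult_left_mono supnorm_le) auto
  finally show ?thesis .
qed

lemma L_diff:
  fixes \<phi> \<psi> :: "('a::t2_space \<Rightarrow> complex) \<Rightarrow> complex"
  assumes cpt: "compact (UNIV::'a set)" and ph: "cmeasure \<phi>" and ps: "cmeasure \<psi>"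
    and g: "continuous_on UNIV g" and h: "continuous_on UNIV h"
  shows "\<phi> (\<lambda>x. \<psi> (\<lambda>y. complex_of_real (g (x, y)))) - \<phi> (\<lambda>x. \<psi> (\<lambda>y. complex_of_real (h (x, y))))
       = \<phi> (\<lambda>x. \<psi> (\<lambda>y. complex_of_real (g (x, y) - h (x, y))))"
proof -
  have Jg: "joint (\<lambda>x y. complex_of_real (g (x, y)))" by (rule jointR[OF g])
  have Jh: "joint (\<lambda>x y. complex_of_real (h (x, y)))" by (rule jointR[OF h])
  have i: "\<psi> (\<lambda>y. complex_of_real (g (x, y) - h (x, y))) = \<psi> (\<lambda>y. complex_of_real (g (x, y))) - \<psi> (\<lambda>y. complex_of_real (h (x, y)))" for x
    using lin_diff[OF cmeasure_lin[OF ps] joint_slice2[OF Jg] joint_slice2[OF Jh]] by simp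
  show ?thesis unfolding i
    by (rule lin_diff[OF cmeasure_lin[OF ph] L_CK[OF cpt ps Jg] L_CK[OF cpt ps Jh], symmetric])
qed

lemma fubini_real:
  fixes \<phi> \<psi> :: "('a::t2_space \<Rightarrow> complex) \<Rightarrow> complex"
  assumes cpt: "compact (UNIV::'a set)" and ph: "cmeasure \<phi>" and ps: "cmeasure \<psi>"
    and g: "continuous_on UNIV g"
  shows "\<phi> (\<lambda>x. \<psi> (\<lambda>y. complex_of_real (g (x, y)))) = \<psi> (\<lambda>y. \<phi> (\<lambda>x. complex_of_real (g (x, y))))"
proof -
  obtain Bp where Bp: "Bp \<ge> 0" "\<And>f. f \<in> CK \<Longrightarrow> norm (\<phi> f) \<le> Bp * supnorm f"
    using cmeasure_bound[OF cpt ph] by blast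
  obtain Bq where Bq: "Bq \<ge> 0" "\<And>f. f \<in> CK \<Longrightarrow> norm (\<psi> f) \<le> Bq * supnorm f"
    using cmeasure_bound[OF cpt ps] by blast
  define sw where "sw = (\<lambda>k :: 'a \<times> 'a \<Rightarrow> real. \<lambda>q. k (snd q, fst q))"
  have swc: "continuous_on UNIV (sw k)" if "continuous_on UNIV k" for k
  proof -
    have "continuous_on UNIV (\<lambda>q::'a \<times> 'a. (snd q, fst q))" by (intro continuous_intros)
    from continuous_on_compose2[OF that this] show ?thesis by (simp add: sw_def)
  qed
  define L where "L k = \<phi> (\<lambda>x. \<psi> (\<lambda>y. complex_of_real (k (x, y))))" for k
  define R where "R k = \<psi> (\<lambda>y. \<phi> (\<lambda>x. complex_of_real (k (x, y))))" for k
  have Rsw: "R k = \<psi> (\<lambda>y. \<phi> (\<lambda>x. complex_of_real (sw k (y, x))))" for k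
    by (simp add: R_def sw_def)
  define c where "c = 2 * (Bp * Bq)"
  have c0: "c \<ge> 0" unfolding c_def using Bp(1) Bq(1) by simp
  have main: "norm (L g - R g) \<le> c * \<epsilon>" if e: "\<epsilon> > 0" for \<epsilon>
  proof -
    obtain p where p: "p \<in> PR" "\<forall>q. \<bar>g q - p q\<bar> < \<epsilon>" using PR_approx[OF cpt g e] by blast
    have pc: "continuous_on UNIV p" by (rule PR_cont[OF p(1)])
    have LR: "L p = R p" unfolding L_def R_def by (rule fubini_PR[OF cpt ph ps p(1)])
    have kc: "continuous_on UNIV (\<lambda>q. g q - p q)" using g pc by (intro continuous_intros)
    have pe: "\<bar>(\<lambda>q. g q - p q) q\<bar> \<le> \<epsilon>" for q using p(2)[rule_format, of q] by simp
    have a: "norm (L g - L p) \<le> Bp * (Bq * \<epsilon>)"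
    proof -
      have "L g - L p = \<phi> (\<lambda>x. \<psi> (\<lambda>y. complex_of_real ((\<lambda>q. g q - p q) (x, y))))"
        unfolding L_def using L_diff[OF cpt ph ps g pc] by simp
      also have "norm \<dots> \<le> Bp * (Bq * \<epsilon>)"
        by (rule double_bound[OF cpt ps Bp Bq kc pe])
      finally show ?thesis .
    qed
    have b: "norm (R g - R p) \<le> Bq * (Bp * \<epsilon>)"
    proof -
      have "R g - R p = \<psi> (\<lambda>y. \<phi> (\<lambda>x. complex_of_real (sw g (y, x) - sw p (y, x))))"
        unfolding Rsw using L_diff[OF cpt ps ph swc[OF g] swc[OF pc]] by simp
      also have "\<dots> = \<psi> (\<lambda>y. \<phi> (\<lambda>x. complex_of_real (sw (\<lambda>q. g q - p q) (y, x))))"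
        by (simp add: sw_def)
      also have "norm \<dots> \<le> Bq * (Bp * \<epsilon>)"
        by (rule double_bound[OF cpt ph Bq Bp swc[OF kc]]) (use p(2) less_imp_le in \<open>auto simp: sw_def\<close>)
      finally show ?thesis .
    qed
    have "L g - R g = (L g - L p) - (R g - R p)" using LR by simp
    then have "norm (L g - R g) \<le> norm (L g - L p) + norm (R g - R p)"
      using norm_triangle_ineq4 by metis
    also have "\<dots> \<le> c * \<epsilon>" using a b unfolding c_def by (simp add: algebra_simps)
    finally show ?thesis .
  qed
  have "L g - R g = 0"
  proof (rule ccontr)
    assume "L g - R g \<noteq> 0"
    then have n: "norm (L g - R g) > 0" by simp
    have "norm (L g - R g) \<le> c * (norm (L g - R g) / (c + 1))"
      using main[of "norm (L g - R g) / (c + 1)"] n c0 by simp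
    also have "\<dots> < norm (L g - R g)" using n c0 by (simp add: field_simps)
    finally show False by simp
  qed
  then show ?thesis unfolding L_def R_def by simp
qed

theorem fubini:
  fixes \<phi> \<psi> :: "('a::t2_space \<Rightarrow> complex) \<Rightarrow> complex" and G :: "'a \<Rightarrow> 'a \<Rightarrow> complex"
  assumes cpt: "compact (UNIV::'a set)" and ph: "cmeasure \<phi>" and ps: "cmeasure \<psi>" and G: "joint G"
  shows "\<phi> (\<lambda>x. \<psi> (\<lambda>y. G x y)) = \<psi> (\<lambda>y. \<phi> (\<lambda>x. G x y))"
proof -
  define g1 where "g1 = (\<lambda>p. Re (G (fst p) (snd p)))"
  define g2 where "g2 = (\<lambda>p. Im (G (fst p) (snd p)))"
  have gc: "continuous_on UNIV g1" "continuous_on UNIV g2"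
    unfolding g1_def g2_def using G[unfolded joint_def] by (auto intro: continuous_intros)
  have Gd: "G x y = complex_of_real (g1 (x, y)) + \<i> * complex_of_real (g2 (x, y))" for x y
    by (simp add: g1_def g2_def complex_eq_iff)
  have J1: "joint (\<lambda>x y. complex_of_real (g1 (x, y)))" by (rule jointR[OF gc(1)])
  have J2: "joint (\<lambda>x y. complex_of_real (g2 (x, y)))" by (rule jointR[OF gc(2)])
  have J1': "joint (\<lambda>y x. complex_of_real (g1 (x, y)))" by (rule joint_swap[OF J1])
  have J2': "joint (\<lambda>y x. complex_of_real (g2 (x, y)))" by (rule joint_swap[OF J2])
  have lin2: "ch (\<lambda>z. a z + \<i> * b z) = ch a + \<i> * ch b" if "lin_on_CK ch" "a \<in> CK" "b \<in> CK" for ch a b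
    using lin_add[OF that(1,2) CK_cmult[OF that(3)]] lin_cmult[OF that(1,3)] by simp
  have i1: "\<psi> (\<lambda>y. G x y) = \<psi> (\<lambda>y. complex_of_real (g1 (x, y))) + \<i> * \<psi> (\<lambda>y. complex_of_real (g2 (x, y)))" for x
    unfolding Gd by (rule lin2[OF cmeasure_lin[OF ps] joint_slice2[OF J1] joint_slice2[OF J2]])
  have i2: "\<phi> (\<lambda>x. G x y) = \<phi> (\<lambda>x. complex_of_real (g1 (x, y))) + \<i> * \<phi> (\<lambda>x. complex_of_real (g2 (x, y)))" for y
    unfolding Gd by (rule lin2[OF cmeasure_lin[OF ph] joint_slice1[OF J1] joint_slice1[OF J2]])
  have "\<phi> (\<lambda>x. \<psi> (\<lambda>y. G x y)) = \<phi> (\<lambda>x. \<psi> (\<lambda>y. complex_of_real (g1 (x, y)))) + \<i> * \<phi> (\<lambda>x. \<psi> (\<lambda>y. complex_of_real (g2 (x, y))))"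
    unfolding i1 by (rule lin2[OF cmeasure_lin[OF ph] L_CK[OF cpt ps J1] L_CK[OF cpt ps J2]])
  also have "\<dots> = \<psi> (\<lambda>y. \<phi> (\<lambda>x. complex_of_real (g1 (x, y)))) + \<i> * \<psi> (\<lambda>y. \<phi> (\<lambda>x. complex_of_real (g2 (x, y))))"
    using fubini_real[OF cpt ph ps gc(1)] fubini_real[OF cpt ph ps gc(2)] by simp
  also have "\<dots> = \<psi> (\<lambda>y. \<phi> (\<lambda>x. G x y))"
    unfolding i2 by (rule lin2[OF cmeasure_lin[OF ps] L_CK[OF cpt ph J1'] L_CK[OF cpt ph J2'], symmetric])
  finally show ?thesis .
qed

lemma sep_pt_closed:
  fixes C :: "'a::t2_space set"
  assumes cpt: "compact (UNIV::'a set)" and C: "closed C" and v: "v \<notin> C"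
  shows "\<exists>A W. open A \<and> open W \<and> v \<in> A \<and> C \<subseteq> W \<and> A \<inter> W = {}"
proof -
  have d: "C \<inter> {v} = {}" using v by auto
  obtain h :: "'a \<Rightarrow> real" where h: "continuous_on UNIV h" "\<forall>x. 0 \<le> h x \<and> h x \<le> 1"
      "\<forall>z\<in>C. h z = 0" "\<forall>z\<in>{v}. h z = 1"
    by (rule urysohn_K[OF cpt C closed_singleton d])
  have "open {x. 1/2 < h x}" "open {x. h x < 1/2}"
    by (intro open_Collect_less continuous_on_const h(1))+
  moreover have "v \<in> {x. 1/2 < h x}" "C \<subseteq> {x. h x < 1/2}" using h(3,4) by auto
  moreover have "{x. 1/2 < h x} \<inter> {x. h x < 1/2} = {}" by auto
  ultimately show ?thesis by blast
qed

lemma supp_mix_sup: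
  fixes \<phi> :: "('a::t2_space \<Rightarrow> complex) \<Rightarrow> complex" and \<Phi> :: "'a \<Rightarrow> ('a \<Rightarrow> complex) \<Rightarrow> complex"
  assumes cpt: "compact (UNIV::'a set)" and ph: "pos \<phi>" and Ph: "\<And>t. pos (\<Phi> t)"
    and Pc: "\<And>f. f \<in> CK \<Longrightarrow> (\<lambda>t. \<Phi> t f) \<in> CK"
    and w: "w \<in> msupp \<phi>" and v: "v \<in> msupp (\<Phi> w)"
  shows "v \<in> msupp (\<lambda>f. \<phi> (\<lambda>t. \<Phi> t f))"
proof (rule ccontr)
  assume "v \<notin> msupp (\<lambda>f. \<phi> (\<lambda>t. \<Phi> t f))"
  then obtain r :: "'a \<Rightarrow> real" where r: "continuous_on UNIV r" "\<forall>x. 0 \<le> r x" "r v = 1"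
    "\<phi> (\<lambda>t. \<Phi> t (\<lambda>x. complex_of_real (r x))) = 0"
    by (rule msupp_witness[OF cpt])
  have nr: "nnf (\<lambda>x. complex_of_real (r x))" using r(1,2) by (intro nnf_ofreal) auto
  have nk: "nnf (\<lambda>t. \<Phi> t (\<lambda>x. complex_of_real (r x)))"
    unfolding nnf_def using Pc[OF nnf_CK[OF nr]] pos_nnf[OF Ph nr] by blast
  have "\<Phi> w (\<lambda>x. complex_of_real (r x)) \<noteq> 0"
    by (rule msupp_pos[OF cpt Ph v nr]) (simp add: r(3))
  then have "\<phi> (\<lambda>t. \<Phi> t (\<lambda>x. complex_of_real (r x))) \<noteq> 0"
    by (intro msupp_pos[OF cpt ph w nk])
  then show False using r(4) by simp
qed

lemma supp_mix_sub:
  fixes \<phi> :: "('a::t2_space \<Rightarrow> complex) \<Rightarrow> complex" and \<Phi> :: "'a \<Rightarrow> ('a \<Rightarrow> complex) \<Rightarrow> complex"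
  assumes cpt: "compact (UNIV::'a set)" and ph: "pos \<phi>" and Ph: "\<And>t. pos (\<Phi> t)"
    and Pc: "\<And>f. f \<in> CK \<Longrightarrow> (\<lambda>t. \<Phi> t f) \<in> CK"
    and Pm: "\<And>U. open U \<Longrightarrow> open {t. msupp (\<Phi> t) \<subseteq> U}"
    and v: "v \<in> msupp (\<lambda>f. \<phi> (\<lambda>t. \<Phi> t f))"
  shows "\<exists>t\<in>msupp \<phi>. v \<in> msupp (\<Phi> t)"
proof (rule ccontr)
  assume na: "\<not> (\<exists>t\<in>msupp \<phi>. v \<in> msupp (\<Phi> t))"
  have "\<forall>t\<in>msupp \<phi>. \<exists>A W. open A \<and> open W \<and> v \<in> A \<and> msupp (\<Phi> t) \<subseteq> W \<and> A \<inter> W = {}"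
    using na sep_pt_closed[OF cpt msupp_closed] by blast
  then obtain AA WW :: "'a \<Rightarrow> 'a set" where AO: "\<And>t. t \<in> msupp \<phi> \<Longrightarrow>
      open (AA t) \<and> open (WW t) \<and> v \<in> AA t \<and> msupp (\<Phi> t) \<subseteq> WW t \<and> AA t \<inter> WW t = {}"
    by metis
  define NN where "NN t = {t'. msupp (\<Phi> t') \<subseteq> WW t}" for t
  have NNo: "open (NN t)" if "t \<in> msupp \<phi>" for t unfolding NN_def using AO[OF that] Pm by blast
  have cov: "msupp \<phi> \<subseteq> (\<Union>t\<in>msupp \<phi>. NN t)" using AO unfolding NN_def by blast
  have cs: "compact (msupp \<phi>)" by (rule compact_closed_K[OF cpt msupp_closed])
  obtain T :: "'a set" where T: "T \<subseteq> msupp \<phi>" "finite T" "msupp \<phi> \<subseteq> (\<Union>t\<in>T. NN t)"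
    using compactE_image[OF cs, of "msupp \<phi>" NN] NNo cov by metis
  define V where "V = (\<Inter>t\<in>T. AA t)"
  have Vo: "open V" unfolding V_def using T AO by (intro open_INT) auto
  have vV: "v \<in> V" unfolding V_def using T AO by blast
  have "nullset (\<lambda>f. \<phi> (\<lambda>t. \<Phi> t f)) V"
    unfolding nullset_def
  proof (intro ballI impI)
    fix f :: "'a \<Rightarrow> complex" assume f: "f \<in> CK" "closure {y. f y \<noteq> 0} \<subseteq> V"
    define N' where "N' = (\<Union>t\<in>T. NN t)"
    have N'o: "open N'" unfolding N'_def using T NNo by blast
    have kz: "\<Phi> t' f = 0" if t'N: "t' \<in> N'" for t'
    proof -
      obtain t :: 'a where t: "t \<in> T" "t' \<in> NN t" using t'N N'_def by blast
      have "msupp (\<Phi> t') \<subseteq> WW t" using t(2) by (simp add: NN_def)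
      moreover have "closure {y. f y \<noteq> 0} \<subseteq> AA t" using f(2) t(1) unfolding V_def by blast
      moreover have "AA t \<inter> WW t = {}" using AO T t(1) by blast
      ultimately have "closure {y. f y \<noteq> 0} \<inter> msupp (\<Phi> t') = {}" by blast
      then show ?thesis by (rule zero_open[OF cpt Ph f(1)])
    qed
    have "closure {t. \<Phi> t f \<noteq> 0} \<subseteq> - N'"
      by (rule closure_minimal) (use kz N'o in auto)
    then have "closure {t. \<Phi> t f \<noteq> 0} \<inter> msupp \<phi> = {}" using T(3) N'_def by blast
    then show "\<phi> (\<lambda>t. \<Phi> t f) = 0" by (rule zero_open[OF cpt ph Pc[OF f(1)]])
  qed
  then have "v \<notin> msupp (\<lambda>f. \<phi> (\<lambda>t. \<Phi> t f))" using Vo vV notin_msupp by blast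
  then show False using v by blast
qed

section \<open>The hypergroup\<close>

locale hg =
  fixes conv :: "'a::t2_space \<Rightarrow> 'a \<Rightarrow> ('a \<Rightarrow> complex) \<Rightarrow> complex"
    and e :: 'a and invo :: "'a \<Rightarrow> 'a"
  assumes H: "compact_hypergroup conv e invo"
begin

lemma cpt: "compact (UNIV::'a set)" using H by (simp add: compact_hypergroup_def)
lemma cprob: "prob_fun (conv x y)" using H by (simp add: compact_hypergroup_def)
lemma assoc: "f \<in> CK \<Longrightarrow> conv x y (\<lambda>u. conv u z f) = conv y z (\<lambda>v. conv x v f)"
  using H by (simp add: compact_hypergroup_def)
lemma jc: "f \<in> CK \<Longrightarrow> joint (\<lambda>x y. conv x y f)"
  using H by (simp add: compact_hypergroup_def joint_def)
lemma mich: "open U \<Longrightarrow> open {p. msupp (conv (fst p) (snd p)) \<subseteq> U}"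
  using H by (simp add: compact_hypergroup_def)
lemma unitl: "f \<in> CK \<Longrightarrow> conv e x f = f x"
  using H by (simp add: compact_hypergroup_def)
lemma unitr: "f \<in> CK \<Longrightarrow> conv x e f = f x"
  using H by (simp add: compact_hypergroup_def)
lemma ic: "continuous_on UNIV invo"
  using H by (simp add: compact_hypergroup_def)
lemma ii[simp]: "invo (invo x) = x"
  using H by (simp add: compact_hypergroup_def)
lemma anti: "f \<in> CK \<Longrightarrow> conv x y (f \<circ> invo) = conv (invo y) (invo x) f"
  using H by (simp add: compact_hypergroup_def)
lemma esupp: "e \<in> msupp (conv x y) \<longleftrightarrow> x = invo y"
  using H by (simp add: compact_hypergroup_def)

lemma cpos: "pos (conv x y)" by (rule prob_pos[OF cprob])
lemma cmeas: "cmeasure (conv x y)" by (rule pos_cmeasure[OF cpt cpos])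
lemma clin: "lin_on_CK (conv x y)" by (rule pos_lin[OF cpos])
lemma c1: "conv x y (\<lambda>_. 1) = 1" using cprob by (simp add: prob_fun_def)

lemma cont_left: "f \<in> CK \<Longrightarrow> (\<lambda>y. conv x y f) \<in> CK"
  by (rule joint_slice2[OF jc])
lemma cont_right: "f \<in> CK \<Longrightarrow> (\<lambda>x. conv x y f) \<in> CK"
  by (rule joint_slice1[OF jc])

lemma mich_left: "open U \<Longrightarrow> open {t. msupp (conv a t) \<subseteq> U}"
proof -
  assume U: "open U"
  have c: "continuous_on UNIV (\<lambda>t. (a, t))" by (intro continuous_intros)
  have "open ((\<lambda>t. (a, t)) -` {p. msupp (conv (fst p) (snd p)) \<subseteq> U} \<inter> UNIV)"
    using c mich[OF U] unfolding continuous_on_open_vimage[OF open_UNIV] by blast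
  then show ?thesis by (simp add: vimage_def)
qed

lemma mich_right: "open U \<Longrightarrow> open {t. msupp (conv t c) \<subseteq> U}"
proof -
  assume U: "open U"
  have cc: "continuous_on UNIV (\<lambda>t. (t, c))" by (intro continuous_intros)
  have "open ((\<lambda>t. (t, c)) -` {p. msupp (conv (fst p) (snd p)) \<subseteq> U} \<inter> UNIV)"
    using cc mich[OF U] unfolding continuous_on_open_vimage[OF open_UNIV] by blast
  then show ?thesis by (simp add: vimage_def)
qed

lemma supp_invo:
  assumes w: "w \<in> msupp (conv a b)"
  shows "invo w \<in> msupp (conv (invo b) (invo a))"
proof (rule ccontr)
  assume "invo w \<notin> msupp (conv (invo b) (invo a))"
  then obtain r :: "'a \<Rightarrow> real" where r: "continuous_on UNIV r" "\<forall>x. 0 \<le> r x" "r (invo w) = 1"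
    "conv (invo b) (invo a) (\<lambda>x. complex_of_real (r x)) = 0"
    by (rule msupp_witness[OF cpt])
  have rc: "continuous_on UNIV (\<lambda>x. r (invo x))"
    using continuous_on_compose2[OF r(1) ic] by simp
  have nf: "nnf (\<lambda>x. complex_of_real (r (invo x)))" using rc r(2) by (intro nnf_ofreal) auto
  have "conv a b ((\<lambda>x. complex_of_real (r x)) \<circ> invo) = conv (invo b) (invo a) (\<lambda>x. complex_of_real (r x))"
    by (rule anti) (rule CK_ofreal[OF r(1)])
  then have z: "conv a b (\<lambda>x. complex_of_real (r (invo x))) = 0" using r(4) by (simp add: o_def)
  have "conv a b (\<lambda>x. complex_of_real (r (invo x))) \<noteq> 0"
    by (rule msupp_pos[OF cpt cpos w nf]) (simp add: r(3))
  then show False using z by simp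
qed

lemma reciprocity:
  assumes z: "z \<in> msupp (conv a b)"
  shows "a \<in> msupp (conv z (invo b))"
proof -
  have e1: "e \<in> msupp (conv z (invo z))" using esupp by simp
  have Pc1: "(\<lambda>t. conv t (invo z) f) \<in> CK" if "f \<in> CK" for f by (rule cont_right[OF that])
  have "e \<in> msupp (\<lambda>f. conv a b (\<lambda>w. conv w (invo z) f))"
    by (rule supp_mix_sup[OF cpt cpos cpos Pc1 z e1])
  moreover have "msupp (\<lambda>f. conv a b (\<lambda>w. conv w (invo z) f)) = msupp (\<lambda>f. conv b (invo z) (\<lambda>t. conv a t f))"
    by (rule msupp_cong) (simp add: assoc)
  ultimately have e2: "e \<in> msupp (\<lambda>f. conv b (invo z) (\<lambda>t. conv a t f))" by simp
  have Pc2: "(\<lambda>t. conv a t f) \<in> CK" if "f \<in> CK" for f by (rule cont_left[OF that])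
  obtain t where t: "t \<in> msupp (conv b (invo z))" "e \<in> msupp (conv a t)"
    using supp_mix_sub[OF cpt cpos cpos Pc2 mich_left e2] by blast
  have "a = invo t" using t(2) esupp by blast
  then have "t = invo a" by simp
  then have "invo (invo a) \<in> msupp (conv (invo (invo z)) (invo b))" using supp_invo[OF t(1)] by simp
  then show ?thesis by simp
qed

end

lemma lin_comb:
  assumes "lin_on_CK \<phi>" "A \<in> CK" "B \<in> CK"
  shows "\<phi> (\<lambda>v. A v - c * B v + d) = \<phi> A - c * \<phi> B + d * \<phi> (\<lambda>_. 1)"
proof -
  have ck: "(\<lambda>v. A v - c * B v) \<in> CK" using assms by (intro CK_diff CK_cmult)
  have "\<phi> (\<lambda>v. A v - c * B v + d) = \<phi> (\<lambda>v. A v - c * B v) + \<phi> (\<lambda>v. d)"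
    using lin_add[OF assms(1) ck CK_const] by simp
  also have "\<phi> (\<lambda>v. A v - c * B v) = \<phi> A - \<phi> (\<lambda>v. c * B v)"
    using lin_diff[OF assms(1) assms(2) CK_cmult[OF assms(3)]] by simp
  also have "\<phi> (\<lambda>v. c * B v) = c * \<phi> B" using lin_cmult[OF assms(1,3)] by simp
  also have "\<phi> (\<lambda>v. d) = d * \<phi> (\<lambda>_. 1)" by (rule lin_constc[OF assms(1)])
  finally show ?thesis .
qed

lemma expand_sq:
  fixes u :: "'a::topological_space \<Rightarrow> real"
  assumes ph: "lin_on_CK \<phi>" and u: "continuous_on UNIV u"
  shows "\<phi> (\<lambda>v. complex_of_real ((u v - c)^2)) =
     \<phi> (\<lambda>v. complex_of_real ((u v)^2)) - complex_of_real (2 * c) * \<phi> (\<lambda>v. complex_of_real (u v))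
       + complex_of_real (c^2) * \<phi> (\<lambda>_. 1)"
proof -
  have e: "(\<lambda>v. complex_of_real ((u v - c)^2)) = (\<lambda>v. complex_of_real ((u v)^2) - complex_of_real (2 * c) * complex_of_real (u v) + complex_of_real (c^2))"
    by (rule ext) (simp add: power2_eq_square algebra_simps)
  have c1: "(\<lambda>v. complex_of_real ((u v)^2)) \<in> CK" using u by (intro CK_ofreal continuous_intros)
  have c2: "(\<lambda>v. complex_of_real (u v)) \<in> CK" using u by (intro CK_ofreal)
  show ?thesis unfolding e by (rule lin_comb[OF ph c1 c2])
qed

context hg
begin

section \<open>Haar measure\<close>

context
  fixes \<omega> :: "('a \<Rightarrow> complex) \<Rightarrow> complex"
  assumes om: "normalized_haar conv \<omega>"
begin

lemma om_prob: "prob_fun \<omega>" using om by (simp add: normalized_haar_def)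
lemma om_pos: "pos \<omega>" by (rule prob_pos[OF om_prob])
lemma om_cm: "cmeasure \<omega>" by (rule pos_cmeasure[OF cpt om_pos])
lemma om_lin: "lin_on_CK \<omega>" by (rule pos_lin[OF om_pos])
lemma om1: "\<omega> (\<lambda>_. 1) = 1" using om_prob by (simp add: prob_fun_def)
lemma om_left: "f \<in> CK \<Longrightarrow> \<omega> (\<lambda>y. conv x y f) = \<omega> f" using om by (simp add: normalized_haar_def)

definition omc :: "('a \<Rightarrow> complex) \<Rightarrow> complex" where
  "omc f = \<omega> (\<lambda>x. f (invo x))"

lemma CK_invo: "f \<in> CK \<Longrightarrow> (\<lambda>x. f (invo x)) \<in> CK"
  by (rule CK_comp[OF _ ic])

lemma omc_pos: "pos omc"
proof -
  have l: "lin_on_CK omc" unfolding lin_on_CK_def omc_def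
    using lin_add[OF om_lin CK_invo CK_invo] lin_cmult[OF om_lin CK_invo] by simp
  have p: "positive_fun omc" unfolding positive_fun_def
  proof (intro ballI impI)
    fix f :: "'a \<Rightarrow> complex" assume f: "f \<in> CK" "\<forall>x. f x = complex_of_real (Re (f x)) \<and> 0 \<le> Re (f x)"
    have "nnf (\<lambda>x. f (invo x))" unfolding nnf_def using CK_invo[OF f(1)] f(2) by blast
    from pos_nnf[OF om_pos this] show "omc f = complex_of_real (Re (omc f)) \<and> 0 \<le> Re (omc f)"
      unfolding omc_def .
  qed
  show ?thesis using l p by (simp add: pos_def)
qed

lemma omc_cm: "cmeasure omc" by (rule pos_cmeasure[OF cpt omc_pos])
lemma omc1: "omc (\<lambda>_. 1) = 1" unfolding omc_def using om1 by simp

lemma omc_right: "f \<in> CK \<Longrightarrow> omc (\<lambda>y. conv y x f) = omc f"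
proof -
  assume f: "f \<in> CK"
  have "conv (invo x) y (f \<circ> invo) = conv (invo y) x f" for y using anti[OF f, of "invo x" y] by simp
  then have "omc (\<lambda>y. conv y x f) = \<omega> (\<lambda>y. conv (invo x) y (\<lambda>z. f (invo z)))"
    unfolding omc_def by (simp add: o_def)
  also have "\<dots> = \<omega> (\<lambda>z. f (invo z))" by (rule om_left[OF CK_invo[OF f]])
  finally show ?thesis unfolding omc_def .
qed

lemma unique:
  assumes nu: "cmeasure \<nu>" and inv: "\<And>z f. f \<in> CK \<Longrightarrow> \<nu> (\<lambda>y. conv z y f) = \<nu> f"
    and f: "f \<in> CK"
  shows "\<nu> f = \<nu> (\<lambda>_. 1) * omc f"
proof -
  have "\<nu> f = \<nu> f * omc (\<lambda>_. 1)" using omc1 by simp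
  also have "\<dots> = omc (\<lambda>z. \<nu> f)" using lin_constc[OF pos_lin[OF omc_pos], of "\<nu> f"] by simp
  also have "\<dots> = omc (\<lambda>z. \<nu> (\<lambda>y. conv z y f))" using inv[OF f] by simp
  also have "\<dots> = \<nu> (\<lambda>y. omc (\<lambda>z. conv z y f))"
    by (rule fubini[OF cpt omc_cm nu jc[OF f]])
  also have "\<dots> = \<nu> (\<lambda>y. omc f)" using omc_right[OF f] by simp
  also have "\<dots> = omc f * \<nu> (\<lambda>_. 1)" by (rule lin_constc[OF cmeasure_lin[OF nu]])
  finally show ?thesis by simp
qed

lemma om_omc: "f \<in> CK \<Longrightarrow> \<omega> f = omc f"
  using unique[OF om_cm om_left] om1 by simp

lemma om_right: "f \<in> CK \<Longrightarrow> \<omega> (\<lambda>y. conv y x f) = \<omega> f"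
  using om_omc omc_right cont_right by metis

lemma om_supp: "msupp \<omega> = UNIV"
proof (rule ccontr)
  assume "msupp \<omega> \<noteq> UNIV"
  then obtain v where "v \<notin> msupp \<omega>" by blast
  then obtain r :: "'a \<Rightarrow> real" where r: "continuous_on UNIV r" "\<forall>x. 0 \<le> r x" "r v = 1"
    "\<omega> (\<lambda>x. complex_of_real (r x)) = 0"
    by (rule msupp_witness[OF cpt])
  have ng: "nnf (\<lambda>x. complex_of_real (r x))" using r(1,2) by (intro nnf_ofreal) auto
  obtain x where x: "x \<in> msupp \<omega>" using msupp_nonempty[OF cpt om_pos] om1 by fastforce
  obtain y where y: "y \<in> msupp (conv v (invo x))" using msupp_nonempty[OF cpt cpos] c1 by fastforce
  have "v \<in> msupp (conv y (invo (invo x)))" by (rule reciprocity[OF y])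
  then have vy: "v \<in> msupp (conv y x)" by simp
  have k: "nnf (\<lambda>t. conv y t (\<lambda>x. complex_of_real (r x)))"
    unfolding nnf_def using cont_left[OF nnf_CK[OF ng]] pos_nnf[OF cpos ng] by blast
  have "conv y x (\<lambda>x. complex_of_real (r x)) \<noteq> 0"
    by (rule msupp_pos[OF cpt cpos vy ng]) (simp add: r(3))
  then have "\<omega> (\<lambda>t. conv y t (\<lambda>x. complex_of_real (r x))) \<noteq> 0"
    by (intro msupp_pos[OF cpt om_pos x k])
  moreover have "\<omega> (\<lambda>t. conv y t (\<lambda>x. complex_of_real (r x))) = 0"
    using om_left[OF nnf_CK[OF ng]] r(4) by simp
  ultimately show False by simp
qed

end

end

context hg
begin

lemma harmonic_const:
  fixes \<omega> \<sigma> :: "('a \<Rightarrow> complex) \<Rightarrow> complex"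
  assumes om: "normalized_haar conv \<omega>" and sig: "prob_fun \<sigma>" and ad: "adapted conv invo \<sigma>"
    and u: "continuous_on UNIV u"
    and harm: "\<And>z. \<sigma> (\<lambda>x. conv z x (\<lambda>v. complex_of_real (u v))) = complex_of_real (u z)"
  shows "u x = u e"
proof -
  define cu where "cu = (\<lambda>v. complex_of_real (u v))"
  define cu2 where "cu2 = (\<lambda>v. complex_of_real ((u v)^2))"
  define G where "G t = (\<lambda>v. complex_of_real ((u v - u t)^2))" for t
  define E where "E t x = conv t x (G t)" for t x
  have sp: "pos \<sigma>" by (rule prob_pos[OF sig])
  have sl: "lin_on_CK \<sigma>" by (rule pos_lin[OF sp])
  have s1: "\<sigma> (\<lambda>_. 1) = 1" using sig by (simp add: prob_fun_def)
  have scm: "cmeasure \<sigma>" by (rule pos_cmeasure[OF cpt sp])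
  have u2: "continuous_on UNIV (\<lambda>v. (u v)^2)" using u by (intro continuous_intros)
  have cuC: "cu \<in> CK" unfolding cu_def by (rule CK_ofreal[OF u])
  have cu2C: "cu2 \<in> CK" unfolding cu2_def by (rule CK_ofreal[OF u2])
  have Gc: "continuous_on UNIV (\<lambda>v. (u v - u t)^2)" for t using u by (intro continuous_intros)
  have GC: "G t \<in> CK" for t unfolding G_def by (rule CK_ofreal[OF Gc])
  have Gn: "nnf (G t)" for t unfolding G_def by (rule nnf_ofreal[OF Gc]) simp
  have EC: "(\<lambda>x. E t x) \<in> CK" for t unfolding E_def by (rule cont_left[OF GC])
  have En: "nnf (\<lambda>x. E t x)" for t
    unfolding nnf_def E_def using cont_left[OF GC] pos_nnf[OF cpos Gn] by blast
  have Eexp: "conv t x (G s) = conv t x cu2 - complex_of_real (2 * u s) * conv t x cu + complex_of_real ((u s)^2)" for t x s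
    using expand_sq[OF clin u, of t x "u s"] c1 unfolding G_def cu_def cu2_def by simp
  \<comment> \<open>(a) the energy vanishes everywhere\<close>
  have S2C: "(\<lambda>z. \<sigma> (\<lambda>x. conv z x cu2)) \<in> CK" by (rule L_CK[OF cpt scm jc[OF cu2C]])
  have hz: "\<sigma> (\<lambda>x. E z x) = \<sigma> (\<lambda>x. conv z x cu2) - cu2 z" for z
  proof -
    have "\<sigma> (\<lambda>x. E z x) = \<sigma> (\<lambda>x. conv z x cu2 - complex_of_real (2 * u z) * conv z x cu + complex_of_real ((u z)^2))"
      unfolding E_def Eexp ..
    also have "\<dots> = \<sigma> (\<lambda>x. conv z x cu2) - complex_of_real (2 * u z) * \<sigma> (\<lambda>x. conv z x cu) + complex_of_real ((u z)^2) * \<sigma> (\<lambda>_. 1)"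
      by (rule lin_comb[OF sl cont_left[OF cu2C] cont_left[OF cuC]])
    also have "\<dots> = \<sigma> (\<lambda>x. conv z x cu2) - cu2 z"
      using harm[of z] s1 unfolding cu_def cu2_def by (simp add: power2_eq_square)
    finally show ?thesis .
  qed
  have hC: "(\<lambda>z. \<sigma> (\<lambda>x. E z x)) \<in> CK" unfolding hz by (rule CK_diff[OF S2C cu2C])
  have hn: "nnf (\<lambda>z. \<sigma> (\<lambda>x. E z x))" unfolding nnf_def using hC pos_nnf[OF sp En] by blast
  have omh: "\<omega> (\<lambda>z. \<sigma> (\<lambda>x. E z x)) = 0"
  proof -
    have "\<omega> (\<lambda>z. \<sigma> (\<lambda>x. E z x)) = \<omega> (\<lambda>z. \<sigma> (\<lambda>x. conv z x cu2)) - \<omega> cu2"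
      unfolding hz by (rule lin_diff[OF om_lin[OF om] S2C cu2C])
    also have "\<omega> (\<lambda>z. \<sigma> (\<lambda>x. conv z x cu2)) = \<sigma> (\<lambda>x. \<omega> (\<lambda>z. conv z x cu2))"
      by (rule fubini[OF cpt om_cm[OF om] scm jc[OF cu2C]])
    also have "\<dots> = \<sigma> (\<lambda>x. \<omega> cu2)" using om_right[OF om cu2C] by simp
    also have "\<dots> = \<omega> cu2" using lin_constc[OF sl, of "\<omega> cu2"] s1 by simp
    finally show ?thesis by simp
  qed
  have h0: "\<sigma> (\<lambda>x. E z x) = 0" for z
  proof (rule ccontr)
    assume "\<sigma> (\<lambda>x. E z x) \<noteq> 0"
    then have "\<omega> (\<lambda>z. \<sigma> (\<lambda>x. E z x)) \<noteq> 0"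
      by (intro msupp_pos[OF cpt om_pos[OF om] _ hn]) (simp add: om_supp[OF om])
    then show False using omh by simp
  qed
  \<comment> \<open>(b) the invariance set\<close>
  define P where "P = {x. \<forall>t. E t x = 0}"
  have SP: "s \<in> P" if s: "s \<in> msupp \<sigma>" for s
    unfolding P_def
  proof (intro CollectI allI, rule ccontr)
    fix t assume "E t s \<noteq> 0"
    then have "\<sigma> (\<lambda>x. E t x) \<noteq> 0" by (intro msupp_pos[OF cpt sp s En])
    then show False using h0 by simp
  qed
  have key: "conv s y (G t) = complex_of_real ((u s - u t)^2)" if Es: "E s y = 0" for s y t
  proof -
    define p where "p = Re (conv s y cu)"
    define q where "q = Re (conv s y cu2)"
    have pe: "conv s y cu = complex_of_real p" unfolding p_def cu_def by (rule pos_real[OF cpos u])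
    have qe: "conv s y cu2 = complex_of_real q" unfolding q_def cu2_def by (rule pos_real[OF cpos u2])
    have ex: "conv s y (\<lambda>v. complex_of_real ((u v - c)^2)) = complex_of_real (q - 2 * c * p + c^2)" for c
      using expand_sq[OF clin u, of s y c] c1 pe qe unfolding cu_def cu2_def by simp
    have "complex_of_real (q - 2 * u s * p + (u s)^2) = 0" using Es ex[of "u s"] unfolding E_def G_def by simp
    then have e1: "q - 2 * u s * p + (u s)^2 = 0" by (simp only: of_real_eq_0_iff)
    have pc: "continuous_on UNIV (\<lambda>v. (u v - p)^2)" using u by (intro continuous_intros)
    have nnp: "nnf (\<lambda>v. complex_of_real ((u v - p)^2))" by (rule nnf_ofreal[OF pc]) simp
    have "0 \<le> Re (conv s y (\<lambda>v. complex_of_real ((u v - p)^2)))" using pos_nnf[OF cpos nnp] by blast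
    then have e2: "0 \<le> q - 2 * p * p + p^2" using ex[of p] by simp
    have "(p - u s)^2 = p^2 - q" using e1 by (simp add: power2_eq_square algebra_simps)
    then have "(p - u s)^2 \<le> 0" using e2 by (simp add: power2_eq_square)
    then have "(p - u s)^2 = 0" using zero_le_power2[of "p - u s"] by linarith
    then have pus: "p = u s" by simp
    then have "q = (u s)^2" using e1 by (simp add: power2_eq_square)
    then have "conv s y (G t) = complex_of_real ((u s)^2 - 2 * u t * u s + (u t)^2)"
      using ex[of "u t"] pus unfolding G_def by simp
    also have "(u s)^2 - 2 * u t * u s + (u t)^2 = (u s - u t)^2" by (simp add: power2_eq_square algebra_simps)
    finally show ?thesis .
  qed
  have prodP: "w \<in> P" if x: "x \<in> P" and y: "y \<in> P" and w: "w \<in> msupp (conv x y)" for x y w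
    unfolding P_def
  proof (intro CollectI allI, rule ccontr)
    fix t assume nz: "E t w \<noteq> 0"
    have "conv x y (\<lambda>w'. E t w') = conv t x (\<lambda>s. conv s y (G t))"
      unfolding E_def using assoc[OF GC, of t x y] by simp
    also have "(\<lambda>s. conv s y (G t)) = G t"
    proof
      fix s have "E s y = 0" using y by (simp add: P_def)
      from key[OF this, of t] show "conv s y (G t) = G t s" by (simp add: G_def)
    qed
    also have "conv t x (G t) = 0" using x by (simp add: P_def E_def)
    finally have z: "conv x y (\<lambda>w'. E t w') = 0" .
    have "conv x y (\<lambda>w'. E t w') \<noteq> 0" by (rule msupp_pos[OF cpt cpos w En nz])
    then show False using z by simp
  qed
  have invP: "invo x \<in> P" if x: "x \<in> P" for x
    unfolding P_def
  proof (intro CollectI allI)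
    fix t
    have "G t w = 0" if w: "w \<in> msupp (conv t (invo x))" for w
    proof -
      have "t \<in> msupp (conv w (invo (invo x)))" by (rule reciprocity[OF w])
      then have tw: "t \<in> msupp (conv w x)" by simp
      have "G w t = 0"
      proof (rule ccontr)
        assume "G w t \<noteq> 0"
        then have "conv w x (G w) \<noteq> 0" by (rule msupp_pos[OF cpt cpos tw Gn])
        then show False using x by (simp add: P_def E_def)
      qed
      then have "(u t - u w)^2 = 0" by (simp add: G_def)
      then have "u t = u w" by simp
      then show ?thesis by (simp add: G_def)
    qed
    then show "E t (invo x) = 0" unfolding E_def by (rule zero_nnf[OF cpt cpos Gn])
  qed
  have clP: "closed P"
  proof -
    have "P = (\<Inter>t. {x. E t x = 0})" by (auto simp: P_def)
    moreover have "closed {x. E t x = 0}" for t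
      using EC[of t] by (intro closed_Collect_eq continuous_on_const) (simp add: CK_def)
    ultimately show ?thesis by auto
  qed
  define A where "A = msupp \<sigma> \<union> invo ` msupp \<sigma>"
  have AP: "A \<subseteq> P" unfolding A_def using SP invP by blast
  have powP: "set_pow conv A (Suc n) \<subseteq> P" for n
  proof (induction n)
    case 0
    then show ?case using AP by simp
  next
    case (Suc n)
    show ?case
    proof
      fix w assume "w \<in> set_pow conv A (Suc (Suc n))"
      then obtain a b where ab: "a \<in> set_pow conv A (Suc n)" "b \<in> A" "w \<in> msupp (conv a b)"
        by (auto simp: set_conv_def)
      show "w \<in> P" using prodP[OF _ _ ab(3)] ab(1,2) Suc.IH AP by blast
    qed
  qed
  have "(\<Union>n\<in>{1..}. set_pow conv A n) \<subseteq> P"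
  proof
    fix w assume "w \<in> (\<Union>n\<in>{1..}. set_pow conv A n)"
    then obtain n where n: "n \<ge> 1" "w \<in> set_pow conv A n" by auto
    then obtain m where "n = Suc m" by (metis Suc_pred' less_eq_Suc_le One_nat_def)
    then show "w \<in> P" using powP n(2) by blast
  qed
  then have "closure (\<Union>n\<in>{1..}. set_pow conv A n) \<subseteq> P" by (rule closure_minimal[OF _ clP])
  then have "UNIV \<subseteq> P" using ad unfolding adapted_def A_def by simp
  then have "E e x = 0" by (auto simp: P_def)
  then have "G e x = 0" unfolding E_def by (simp add: unitl[OF GC])
  then show ?thesis by (simp add: G_def)
qed

end

theorem theorem4p18:
  fixes conv :: "'a::t2_space \<Rightarrow> 'a \<Rightarrow> ('a \<Rightarrow> complex) \<Rightarrow> complex"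
    and e :: 'a and invo :: "'a \<Rightarrow> 'a"
    and \<omega> \<sigma> :: "('a \<Rightarrow> complex) \<Rightarrow> complex"
  assumes "compact_hypergroup conv e invo"
    and "normalized_haar conv \<omega>"
    and "prob_fun \<sigma>"
    and "adapted conv invo \<sigma>"
  shows "H_sigma conv \<sigma> = {\<mu>. cmeasure \<mu> \<and> (\<exists>c::complex. \<forall>f\<in>CK. \<mu> f = c * \<omega> f)}"
proof -
  interpret hg conv e invo by (rule hg.intro) (rule assms(1))
  note om = assms(2)
  have sp: "pos \<sigma>" by (rule prob_pos[OF assms(3)])
  have sl: "lin_on_CK \<sigma>" by (rule pos_lin[OF sp])
  have s1: "\<sigma> (\<lambda>_. 1) = 1" using assms(3) by (simp add: prob_fun_def)
  have scm: "cmeasure \<sigma>" by (rule pos_cmeasure[OF cpt sp])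
  show ?thesis
  proof (intro set_eqI iffI)
    fix \<mu> assume "\<mu> \<in> H_sigma conv \<sigma>"
    then have mu: "cmeasure \<mu>" and hyp: "\<And>f. f \<in> CK \<Longrightarrow> \<sigma> (\<lambda>x. \<mu> (\<lambda>y. conv x y f)) = \<mu> f"
      by (auto simp: H_sigma_def mconv_def)
    have linv: "\<mu> (\<lambda>y. conv z y f) = \<mu> f" if f: "f \<in> CK" for z f
    proof -
      define F where "F z = \<mu> (\<lambda>y. conv z y f)" for z
      have FC: "F \<in> CK" unfolding F_def by (rule L_CK[OF cpt mu jc[OF f]])
      have harm: "F z = \<sigma> (\<lambda>x. conv z x F)" for z
      proof -
        have g: "(\<lambda>w. conv z w f) \<in> CK" by (rule cont_left[OF f])
        have "F z = \<sigma> (\<lambda>x. \<mu> (\<lambda>y. conv x y (\<lambda>w. conv z w f)))" unfolding F_def using hyp[OF g] by simp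
        also have "\<dots> = \<sigma> (\<lambda>x. \<mu> (\<lambda>y. conv z x (\<lambda>v. conv v y f)))"
          using assoc[OF f, of z _ _] by simp
        also have "\<dots> = \<sigma> (\<lambda>x. conv z x F)"
        proof -
          have "\<mu> (\<lambda>y. conv z x (\<lambda>v. conv v y f)) = conv z x (\<lambda>v. \<mu> (\<lambda>y. conv v y f))" for x
            by (rule fubini[OF cpt mu cmeas joint_swap[OF jc[OF f]]])
          then show ?thesis unfolding F_def by simp
        qed
        finally show ?thesis .
      qed
      have u1c: "continuous_on UNIV (\<lambda>z. Re (F z))" by (rule CK_Re[OF FC])
      have u2c: "continuous_on UNIV (\<lambda>z. Im (F z))" by (rule CK_Im[OF FC])
      have h1: "\<sigma> (\<lambda>x. conv z x (\<lambda>v. complex_of_real (Re (F v)))) = complex_of_real (Re (F z))" for z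
      proof -
        have "\<sigma> (\<lambda>x. conv z x (\<lambda>v. complex_of_real (Re (F v)))) = \<sigma> (\<lambda>x. complex_of_real (Re (conv z x F)))"
          using pos_Re(1)[OF cpos FC] by simp
        also have "\<dots> = complex_of_real (Re (\<sigma> (\<lambda>x. conv z x F)))"
          by (rule pos_Re(1)[OF sp cont_left[OF FC]])
        finally show ?thesis using harm[of z] by simp
      qed
      have h2: "\<sigma> (\<lambda>x. conv z x (\<lambda>v. complex_of_real (Im (F v)))) = complex_of_real (Im (F z))" for z
      proof -
        have "\<sigma> (\<lambda>x. conv z x (\<lambda>v. complex_of_real (Im (F v)))) = \<sigma> (\<lambda>x. complex_of_real (Im (conv z x F)))"
          using pos_Re(2)[OF cpos FC] by simp
        also have "\<dots> = complex_of_real (Im (\<sigma> (\<lambda>x. conv z x F)))"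
          by (rule pos_Re(2)[OF sp cont_left[OF FC]])
        finally show ?thesis using harm[of z] by simp
      qed
      have "Re (F z) = Re (F e)" by (rule harmonic_const[OF om assms(3) assms(4) u1c h1])
      moreover have "Im (F z) = Im (F e)" by (rule harmonic_const[OF om assms(3) assms(4) u2c h2])
      ultimately have "F z = F e" by (simp add: complex_eq_iff)
      moreover have "F e = \<mu> f" unfolding F_def using unitl[OF f] by simp
      ultimately show ?thesis unfolding F_def by simp
    qed
    have "\<mu> f = \<mu> (\<lambda>_. 1) * \<omega> f" if f: "f \<in> CK" for f
      using unique[OF om mu linv f] om_omc[OF om f] by simp
    then show "\<mu> \<in> {\<mu>. cmeasure \<mu> \<and> (\<exists>c::complex. \<forall>f\<in>CK. \<mu> f = c * \<omega> f)}" using mu by blast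
  next
    fix \<mu> assume "\<mu> \<in> {\<mu>. cmeasure \<mu> \<and> (\<exists>c::complex. \<forall>f\<in>CK. \<mu> f = c * \<omega> f)}"
    then obtain c where mu: "cmeasure \<mu>" and mc: "\<And>f. f \<in> CK \<Longrightarrow> \<mu> f = c * \<omega> f" by blast
    have "mconv conv \<sigma> \<mu> f = \<mu> f" if f: "f \<in> CK" for f
    proof -
      have "mconv conv \<sigma> \<mu> f = \<sigma> (\<lambda>x. \<mu> (\<lambda>y. conv x y f))" by (simp add: mconv_def)
      also have "\<dots> = \<sigma> (\<lambda>x. c * \<omega> f)"
        using mc[OF cont_left[OF f]] om_left[OF om f] by simp
      also have "\<dots> = c * \<omega> f" using lin_constc[OF sl, of "c * \<omega> f"] s1 by simp
      finally show ?thesis using mc[OF f] by simp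
    qed
    then show "\<mu> \<in> H_sigma conv \<sigma>" using mu by (simp add: H_sigma_def)
  qed
qed


end
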